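(* Let $R$ be a number ring. Assume that for every maximal ideal $\mathfrak p$ of $R$ we have $N(\mathfrak p^2)\leq N(\mathfrak p)^2$. Then $R$ is a Dedekind domain.
   Context: A number ring is a subring of a number field (a finite extension of $\mathbb{Q}$). For a non-zero ideal $I$ of $R$, $N(I)=[R:I]$ is its index as an additive subgroup. *)

theory Defs
  imports Complex_Main
begin

text \<open>All rings live inside an ambient field of characteristic 0 (type class field_char_0);
  a number field is a subfield that is finite-dimensional over the rationals, a number ring
  is a subring (with 1) of a number field.\<close>

definition is_subring :: "'a::field_char_0 set \<Rightarrow> bool" where
  "is_subring R \<longleftrightarrow> 1 \<in> R \<and> (\<forall>x\<in>R. \<forall>y\<in>R. x + y \<in> R \<and> x * y \<in> R) \<and> (\<forall>x\<in>R. - x \<in> R)"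

definition is_subfield :: "'a::field_char_0 set \<Rightarrow> bool" where
  "is_subfield K \<longleftrightarrow> is_subring K \<and> (\<forall>x\<in>K. x \<noteq> 0 \<longrightarrow> inverse x \<in> K)"

definition number_field :: "'a::field_char_0 set \<Rightarrow> bool" where
  "number_field K \<longleftrightarrow> is_subfield K \<and>
     (\<exists>B. finite B \<and> B \<subseteq> K \<and> K = {\<Sum>b\<in>B. of_rat (q b) * b | q. True})"

definition number_ring :: "'a::field_char_0 set \<Rightarrow> bool" where
  "number_ring R \<longleftrightarrow> is_subring R \<and> (\<exists>K. number_field K \<and> R \<subseteq> K)"

definition ideal_in :: "'a::field_char_0 set \<Rightarrow> 'a set \<Rightarrow> bool" where
  "ideal_in R I \<longleftrightarrow> I \<subseteq> R \<and> 0 \<in> I \<and> (\<forall>x\<in>I. \<forall>y\<in>I. x + y \<in> I) \<and> (\<forall>x\<in>I. - x \<in> I)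
      \<and> (\<forall>r\<in>R. \<forall>x\<in>I. r * x \<in> I)"

definition maximal_ideal_in :: "'a::field_char_0 set \<Rightarrow> 'a set \<Rightarrow> bool" where
  "maximal_ideal_in R P \<longleftrightarrow> ideal_in R P \<and> P \<noteq> R \<and>
     (\<forall>J. ideal_in R J \<and> P \<subseteq> J \<longrightarrow> J = P \<or> J = R)"

definition prime_ideal_in :: "'a::field_char_0 set \<Rightarrow> 'a set \<Rightarrow> bool" where
  "prime_ideal_in R P \<longleftrightarrow> ideal_in R P \<and> P \<noteq> R \<and>
     (\<forall>a\<in>R. \<forall>b\<in>R. a * b \<in> P \<longrightarrow> a \<in> P \<or> b \<in> P)"

definition ideal_gen :: "'a::field_char_0 set \<Rightarrow> 'a set \<Rightarrow> 'a set" where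
  "ideal_gen R S = \<Inter>{J. ideal_in R J \<and> S \<subseteq> J}"

definition ideal_prod :: "'a::field_char_0 set \<Rightarrow> 'a set \<Rightarrow> 'a set \<Rightarrow> 'a set" where
  "ideal_prod R I J = ideal_gen R {a * b | a b. a \<in> I \<and> b \<in> J}"

definition ideal_norm :: "'a::field_char_0 set \<Rightarrow> 'a set \<Rightarrow> nat" where
  "ideal_norm R I = card ((\<lambda>r. (\<lambda>x. r + x) ` I) ` R)"

definition noetherian_ring :: "'a::field_char_0 set \<Rightarrow> bool" where
  "noetherian_ring R \<longleftrightarrow> (\<forall>I. ideal_in R I \<longrightarrow> (\<exists>F. finite F \<and> F \<subseteq> I \<and> I = ideal_gen R F))"

definition integral_over :: "'a::field_char_0 set \<Rightarrow> 'a \<Rightarrow> bool" where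
  "integral_over R x \<longleftrightarrow> (\<exists>n::nat. \<exists>c. n \<ge> 1 \<and> (\<forall>i<n. c i \<in> R) \<and>
      x ^ n + (\<Sum>i<n. c i * x ^ i) = 0)"

definition integrally_closed :: "'a::field_char_0 set \<Rightarrow> bool" where
  "integrally_closed R \<longleftrightarrow> (\<forall>x. (\<exists>a\<in>R. \<exists>b\<in>R. b \<noteq> 0 \<and> x = a / b) \<and> integral_over R x \<longrightarrow> x \<in> R)"

text \<open>Dedekind domain: Noetherian integrally closed domain in which every nonzero prime ideal
  is maximal (being a domain is automatic for a subring of a field).\<close>
definition dedekind_domain :: "'a::field_char_0 set \<Rightarrow> bool" where
  "dedekind_domain R \<longleftrightarrow> is_subring R \<and> noetherian_ring R \<and> integrally_closed R \<and>
     (\<forall>P. prime_ideal_in R P \<and> P \<noteq> {0} \<longrightarrow> maximal_ideal_in R P)"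

end

theory Submission
  imports Defs "HOL-Library.FuncSet"
begin
interpretation zm: module "\<lambda>(k::int) (x::'a::field_char_0). of_int k * x"
  by standard (auto simp: algebra_simps)
interpretation qv: vector_space "\<lambda>(q::rat) (x::'a::field_char_0). of_rat q * x"
  by standard (auto simp: algebra_simps of_rat_add of_rat_mult)

declare zm.scale_scale[simp del] qv.scale_scale[simp del]

lemma rat_gcd2:
  fixes r1 r2 :: rat
  shows "\<exists>g s t a b. g = of_int s * r1 + of_int t * r2 \<and> r1 = of_int a * g \<and> r2 = of_int b * g"
proof -
  obtain a1 d1 where q1: "quotient_of r1 = (a1, d1)" by (cases "quotient_of r1") auto
  obtain a2 d2 where q2: "quotient_of r2 = (a2, d2)" by (cases "quotient_of r2") auto
  have d1: "d1 > 0" using q1 quotient_of_denom_pos by blast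
  have d2: "d2 > 0" using q2 quotient_of_denom_pos by blast
  have r1: "r1 = of_int a1 / of_int d1" using q1 quotient_of_div by blast
  have r2: "r2 = of_int a2 / of_int d2" using q2 quotient_of_div by blast
  define A where "A = a1 * d2"
  define B where "B = a2 * d1"
  define D where "D = d1 * d2"
  have D: "D > 0" using d1 d2 by (simp add: D_def)
  have r1': "r1 = of_int A / of_int D" using r1 d2 by (simp add: A_def D_def)
  have r2': "r2 = of_int B / of_int D" using r2 d1 by (simp add: B_def D_def)
  define G where "G = gcd A B"
  obtain s t where st: "s * A + t * B = G" using bezout_int[of A B] G_def by metis
  define g where "g = (of_int G / of_int D :: rat)"
  have A: "A = (A div G) * G" by (simp add: G_def)
  have B: "B = (B div G) * G" by (simp add: G_def)
  have e1: "r1 = of_int (A div G) * g"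
  proof -
    have "r1 = of_int ((A div G) * G) / of_int D" using r1' A by simp
    then show ?thesis by (simp add: g_def)
  qed
  have e2: "r2 = of_int (B div G) * g"
  proof -
    have "r2 = of_int ((B div G) * G) / of_int D" using r2' B by simp
    then show ?thesis by (simp add: g_def)
  qed
  have e3: "g = of_int s * r1 + of_int t * r2"
  proof -
    have "of_int G = (of_int s * of_int A + of_int t * of_int B :: rat)"
      using st by (metis of_int_add of_int_mult)
    then show ?thesis using r1' r2' by (simp add: g_def add_divide_distrib)
  qed
  show ?thesis using e1 e2 e3 by blast
qed

lemma rat_gcd_family:
  fixes f :: "'b \<Rightarrow> rat"
  assumes "finite X"
  shows "\<exists>h c z. h = (\<Sum>x\<in>X. of_int (c x) * f x) \<and> (\<forall>x\<in>X. f x = of_int (z x) * h)"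
  using assms
proof (induction X rule: finite_induct)
  case empty
  show ?case by (intro exI[of _ 0]) simp
next
  case (insert a X)
  from insert(3) obtain h c z where h: "h = (\<Sum>x\<in>X. of_int (c x) * f x)" and z: "\<forall>x\<in>X. f x = of_int (z x) * h"
    by (elim exE conjE)
  from rat_gcd2[of h "f a"] obtain g s t \<alpha> \<beta> where g: "g = of_int s * h + of_int t * f a" "h = of_int \<alpha> * g" "f a = of_int \<beta> * g"
    by (elim exE conjE)
  define c' where "c' = (\<lambda>x. if x = a then t else s * c x)"
  define z' where "z' = (\<lambda>x. if x = a then \<beta> else z x * \<alpha>)"
  have s1: "(\<Sum>x\<in>insert a X. of_int (c' x) * f x) = of_int (c' a) * f a + (\<Sum>x\<in>X. of_int (c' x) * f x)"
    by (rule sum.insert[OF insert(1,2)])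
  have s2: "(\<Sum>x\<in>X. of_int (c' x) * f x) = (\<Sum>x\<in>X. of_int s * (of_int (c x) * f x))"
  proof (rule sum.cong)
    fix x assume "x \<in> X"
    then have "x \<noteq> a" using insert(2) by blast
    then show "of_int (c' x) * f x = of_int s * (of_int (c x) * f x)" by (simp add: c'_def)
  qed simp
  have 1: "g = (\<Sum>x\<in>insert a X. of_int (c' x) * f x)"
    unfolding s1 s2 by (simp add: c'_def g(1) h sum_distrib_left)
  have 2: "\<forall>x\<in>insert a X. f x = of_int (z' x) * g"
  proof
    fix x assume x: "x \<in> insert a X"
    show "f x = of_int (z' x) * g"
    proof (cases "x = a")
      case True then show ?thesis using g(3) by (simp add: z'_def)
    next
      case False
      then have "x \<in> X" using x by blast
      then have "f x = of_int (z x) * h" using z by blast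
      then show ?thesis using False g(2) by (simp add: z'_def)
    qed
  qed
  show ?case using 1 2 by blast
qed

lemma lattice_gen:
  fixes B :: "'a::field_char_0 set"
  assumes "finite B"
  shows "finite X \<Longrightarrow> X \<subseteq> qv.span B \<Longrightarrow>
     \<exists>Y. finite Y \<and> card Y \<le> card B \<and> Y \<subseteq> zm.span X \<and> X \<subseteq> zm.span Y"
  using assms
proof (induction B arbitrary: X rule: finite_induct)
  case empty
  then show ?case by (intro exI[of _ "{}"]) auto
next
  case (insert b B X)
  have "\<forall>x\<in>X. \<exists>k. x - of_rat k * b \<in> qv.span B"
    using insert.prems(2) qv.span_insert by blast
  then obtain q where q: "\<forall>x\<in>X. x - of_rat (q x) * b \<in> qv.span B" by metis
  obtain h c z where h: "h = (\<Sum>x\<in>X. of_int (c x) * q x)" and z: "\<forall>x\<in>X. q x = of_int (z x) * h"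
    using rat_gcd_family[OF insert.prems(1), of q] by (elim exE conjE)
  define w where "w = (\<Sum>x\<in>X. of_int (c x) * x)"
  have wX: "w \<in> zm.span X" unfolding w_def
    by (intro zm.span_sum zm.span_scale zm.span_base)
  have "of_rat h * b = (\<Sum>x\<in>X. of_int (c x) * (of_rat (q x) * b))"
    by (simp add: h of_rat_sum of_rat_mult sum_distrib_right mult.assoc)
  then have "w - of_rat h * b = (\<Sum>x\<in>X. of_rat (of_int (c x)) * (x - of_rat (q x) * b))"
    by (simp add: w_def algebra_simps sum_subtractf)
  also have "\<dots> \<in> qv.span B"
    using q by (intro qv.span_sum qv.span_scale) blast
  finally have wB: "w - of_rat h * b \<in> qv.span B" .
  define X' where "X' = (\<lambda>x. x - of_int (z x) * w) ` X"
  have X'B: "X' \<subseteq> qv.span B"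
  proof
    fix y assume "y \<in> X'"
    then obtain x where x: "x \<in> X" "y = x - of_int (z x) * w" by (auto simp: X'_def)
    have "y = (x - of_rat (q x) * b) - of_rat (of_int (z x)) * (w - of_rat h * b)"
      using z x by (simp add: algebra_simps of_rat_mult)
    also have "\<dots> \<in> qv.span B"
    proof (rule qv.span_diff)
      show "x - of_rat (q x) * b \<in> qv.span B" using q x by auto
      show "of_rat (of_int (z x)) * (w - of_rat h * b) \<in> qv.span B" using wB by (rule qv.span_scale)
    qed
    finally show "y \<in> qv.span B" .
  qed
  have "finite X'" using insert.prems(1) by (simp add: X'_def)
  from insert.IH[OF this X'B] obtain Y' where Y': "finite Y'" "card Y' \<le> card B" "Y' \<subseteq> zm.span X'" "X' \<subseteq> zm.span Y'"
    by blast
  have X'X: "X' \<subseteq> zm.span X"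
  proof
    fix y assume "y \<in> X'"
    then obtain x where x: "x \<in> X" "y = x - of_int (z x) * w" by (auto simp: X'_def)
    have "x \<in> zm.span X" using x by (simp add: zm.span_base)
    moreover have "of_int (z x) * w \<in> zm.span X" using wX by (rule zm.span_scale)
    ultimately show "y \<in> zm.span X" unfolding x by (rule zm.span_diff)
  qed
  have "zm.span X' \<subseteq> zm.span X"
    using X'X by (metis zm.span_minimal zm.subspace_span)
  then have 1: "insert w Y' \<subseteq> zm.span X" using Y'(3) wX by auto
  have 2: "X \<subseteq> zm.span (insert w Y')"
  proof
    fix x assume x: "x \<in> X"
    have "x - of_int (z x) * w \<in> zm.span Y'" using Y'(4) x by (auto simp: X'_def)
    then have "x - of_int (z x) * w \<in> zm.span (insert w Y')"
      using zm.span_mono[of Y' "insert w Y'"] by blast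
    moreover have "of_int (z x) * w \<in> zm.span (insert w Y')"
      by (intro zm.span_scale zm.span_base) auto
    ultimately have "(x - of_int (z x) * w) + of_int (z x) * w \<in> zm.span (insert w Y')"
      by (rule zm.span_add)
    then show "x \<in> zm.span (insert w Y')" by simp
  qed
  have 3: "card (insert w Y') \<le> card (insert b B)"
    using Y'(1,2) insert(1,2) card_insert_le[of Y' w] by (simp add: card_insert_if)
  have 4: "finite (insert w Y')" using Y'(1) by simp
  show ?case using 1 2 3 4 by blast
qed

lemma subring_0: "is_subring R \<Longrightarrow> 0 \<in> R"
  unfolding is_subring_def by (metis add.right_inverse)

lemma subring_add: "is_subring R \<Longrightarrow> x \<in> R \<Longrightarrow> y \<in> R \<Longrightarrow> x + y \<in> R"
  unfolding is_subring_def by blast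
lemma subring_mult: "is_subring R \<Longrightarrow> x \<in> R \<Longrightarrow> y \<in> R \<Longrightarrow> x * y \<in> R"
  unfolding is_subring_def by blast
lemma subring_uminus: "is_subring R \<Longrightarrow> x \<in> R \<Longrightarrow> - x \<in> R"
  unfolding is_subring_def by blast
lemma subring_1: "is_subring R \<Longrightarrow> 1 \<in> R"
  unfolding is_subring_def by blast
lemma subring_diff: "is_subring R \<Longrightarrow> x \<in> R \<Longrightarrow> y \<in> R \<Longrightarrow> x - y \<in> R"
  using subring_add subring_uminus by (metis diff_conv_add_uminus)

lemma subring_of_nat: "is_subring R \<Longrightarrow> of_nat n \<in> R"
  by (induction n) (auto simp: subring_0 subring_1 subring_add)
lemma subring_of_int: "is_subring R \<Longrightarrow> of_int k \<in> R"
  by (cases k rule: int_cases) (auto simp: subring_of_nat subring_uminus simp del: of_nat_Suc)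
lemma subring_power: "is_subring R \<Longrightarrow> x \<in> R \<Longrightarrow> x ^ n \<in> R"
  by (induction n) (auto simp: subring_1 subring_mult)

lemma subring_zsub: "is_subring R \<Longrightarrow> zm.subspace R"
  by (rule zm.subspaceI) (auto simp: subring_0 subring_add subring_mult subring_of_int)

lemma subring_sum: "is_subring R \<Longrightarrow> (\<And>i. i \<in> A \<Longrightarrow> f i \<in> R) \<Longrightarrow> sum f A \<in> R"
  using subring_zsub zm.subspace_sum by metis

lemma subring_zspan: "is_subring R \<Longrightarrow> S \<subseteq> R \<Longrightarrow> zm.span S \<subseteq> R"
  using subring_zsub zm.span_minimal by metis

lemma number_ring_span:
  assumes "number_ring R"
  obtains K B where "number_field K" "R \<subseteq> K" "finite B" "K = qv.span B" "is_subring K"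
proof -
  obtain K where K: "number_field K" "R \<subseteq> K" using assms unfolding number_ring_def by blast
  then obtain B where B: "finite B" "B \<subseteq> K" "K = {\<Sum>b\<in>B. of_rat (q b) * b | q. True}"
    unfolding number_field_def by blast
  have "K = qv.span B" using B by (auto simp: qv.span_finite)
  moreover have "is_subring K" using K(1) unfolding number_field_def is_subfield_def by blast
  ultimately show ?thesis using that K B by blast
qed

lemma coset_collision:
  fixes R :: "'a::field_char_0 set"
  assumes R: "is_subring R" and RB: "R \<subseteq> qv.span B" and B: "finite B" and m: "m > 0"
    and S: "S \<subseteq> R" "finite S" "card S > m ^ card B"
  shows "\<exists>x\<in>S. \<exists>y\<in>S. x \<noteq> y \<and> (\<exists>r\<in>R. x - y = of_nat m * r)"
proof -
  from lattice_gen[OF B S(2)] S(1) RB obtain Y where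
    Y: "finite Y" "card Y \<le> card B" "Y \<subseteq> zm.span S" "S \<subseteq> zm.span Y"
    by (meson order_trans)
  have YR: "Y \<subseteq> R" using Y(3) subring_zspan[OF R S(1)] by blast
  have "\<forall>x\<in>S. \<exists>u. x = (\<Sum>v\<in>Y. of_int (u v) * v)"
    using Y(4) zm.span_finite[OF Y(1)] by blast
  then obtain u where u: "\<forall>x\<in>S. x = (\<Sum>v\<in>Y. of_int (u x v) * v)" by metis
  define F where "F = (\<lambda>x. restrict (\<lambda>v. u x v mod int m) Y)"
  define P where "P = (\<Pi>\<^sub>E v\<in>Y. {0..<int m})"
  have FP: "F ` S \<subseteq> P" using m by (auto simp: F_def P_def)
  have cardP: "card P = m ^ card Y" using Y(1) by (simp add: P_def card_PiE)
  have "m ^ card Y \<le> m ^ card B" using m Y(2) by (simp add: power_increasing)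
  then have "\<not> inj_on F S"
    using card_inj_on_le[OF _ FP] cardP S(3) by (metis P_def Y(1) finite_PiE finite_atLeastLessThan_int leD le_trans)
  then obtain x y where xy: "x \<in> S" "y \<in> S" "x \<noteq> y" "F x = F y"
    unfolding inj_on_def by blast
  have dv: "\<forall>v\<in>Y. int m dvd u x v - u y v"
  proof
    fix v assume v: "v \<in> Y"
    have "F x v = F y v" using xy(4) by simp
    then have "u x v mod int m = u y v mod int m" using v by (simp add: F_def)
    then show "int m dvd u x v - u y v" by (simp add: mod_eq_dvd_iff)
  qed
  define r where "r = (\<Sum>v\<in>Y. of_int ((u x v - u y v) div int m) * v)"
  have rR: "r \<in> R" unfolding r_def using YR
    by (intro subring_sum[OF R] subring_mult[OF R] subring_of_int[OF R]) auto
  have "x - y = (\<Sum>v\<in>Y. of_int (u x v - u y v) * v)"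
    using u xy(1,2) by (simp add: sum_subtractf algebra_simps)
  also have "\<dots> = (\<Sum>v\<in>Y. of_nat m * (of_int ((u x v - u y v) div int m) * v))"
  proof (rule sum.cong)
    fix v assume v: "v \<in> Y"
    have "u x v - u y v = int m * ((u x v - u y v) div int m)" using dv v by simp
    then have "(of_int (u x v - u y v) :: 'a) = of_nat m * of_int ((u x v - u y v) div int m)"
      by (metis of_int_mult of_int_of_nat_eq)
    then show "of_int (u x v - u y v) * v = of_nat m * (of_int ((u x v - u y v) div int m) * v)"
      by simp
  qed simp
  also have "\<dots> = of_nat m * r" by (simp add: r_def sum_distrib_left)
  finally show ?thesis using xy rR by blast
qed

definition addsub :: "'a::ab_group_add set \<Rightarrow> bool" where
  "addsub I \<longleftrightarrow> 0 \<in> I \<and> (\<forall>x\<in>I. \<forall>y\<in>I. x + y \<in> I) \<and> (\<forall>x\<in>I. - x \<in> I)"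

lemma addsub_diff: "addsub I \<Longrightarrow> x \<in> I \<Longrightarrow> y \<in> I \<Longrightarrow> x - y \<in> I"
  unfolding addsub_def by (metis diff_conv_add_uminus)

lemma coset_eq_iff:
  assumes "addsub I"
  shows "((+) x ` I = (+) y ` I) \<longleftrightarrow> x - y \<in> I"
proof
  assume "(+) x ` I = (+) y ` I"
  moreover have "x \<in> (+) x ` I" using assms unfolding addsub_def by force
  ultimately obtain i where "i \<in> I" "x = y + i" by auto
  then show "x - y \<in> I" by simp
next
  assume d: "x - y \<in> I"
  have md: "y - x \<in> I" using d assms unfolding addsub_def by (metis minus_diff_eq)
  show "(+) x ` I = (+) y ` I"
  proof
    show "(+) x ` I \<subseteq> (+) y ` I"
    proof
      fix z assume "z \<in> (+) x ` I"
      then obtain i where i: "i \<in> I" "z = x + i" by auto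
      have "(x - y) + i \<in> I" using d i assms unfolding addsub_def by blast
      moreover have "z = y + ((x - y) + i)" using i by simp
      ultimately show "z \<in> (+) y ` I" by blast
    qed
    show "(+) y ` I \<subseteq> (+) x ` I"
    proof
      fix z assume "z \<in> (+) y ` I"
      then obtain i where i: "i \<in> I" "z = y + i" by auto
      have "(y - x) + i \<in> I" using md i assms unfolding addsub_def by blast
      moreover have "z = x + ((y - x) + i)" using i by simp
      ultimately show "z \<in> (+) x ` I" by blast
    qed
  qed
qed

lemma cosets_finite:
  fixes R :: "'a::field_char_0 set"
  assumes "number_ring R" "addsub I" "I \<subseteq> R" "m > 0" "\<forall>r\<in>R. of_nat m * r \<in> I"
  shows "finite ((\<lambda>r. (+) r ` I) ` R)"
proof (rule ccontr)
  assume inf: "\<not> ?thesis"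
  obtain K B where KB: "R \<subseteq> K" "finite B" "K = qv.span B"
    using number_ring_span[OF assms(1)] by metis
  have R: "is_subring R" using assms(1) unfolding number_ring_def by blast
  obtain C where C: "finite C" "card C = m ^ card B + 1" "C \<subseteq> (\<lambda>r. (+) r ` I) ` R"
    using infinite_arbitrarily_large[OF inf] by blast
  define rep where "rep = (\<lambda>c. SOME r. r \<in> R \<and> c = (+) r ` I)"
  have rep: "\<forall>c\<in>C. rep c \<in> R \<and> c = (+) (rep c) ` I"
  proof
    fix c assume "c \<in> C"
    then have "\<exists>r. r \<in> R \<and> c = (+) r ` I" using C(3) by blast
    then show "rep c \<in> R \<and> c = (+) (rep c) ` I" unfolding rep_def by (rule someI_ex)
  qed
  have inj: "inj_on rep C" by (metis inj_onI rep)
  have S: "rep ` C \<subseteq> R" "finite (rep ` C)" "card (rep ` C) > m ^ card B"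
    using rep C inj by (auto simp: card_image)
  from coset_collision[OF R _ KB(2) assms(4) S] KB
  obtain x y r where xy: "x \<in> rep ` C" "y \<in> rep ` C" "x \<noteq> y" "r \<in> R" "x - y = of_nat m * r"
    by blast
  obtain cx cy where c: "cx \<in> C" "cy \<in> C" "x = rep cx" "y = rep cy" using xy by blast
  have "x - y \<in> I" using xy assms(5) by simp
  then have "(+) x ` I = (+) y ` I" using coset_eq_iff[OF assms(2)] by blast
  then have "cx = cy" using rep c by metis
  then show False using c xy by simp
qed

lemma ideal_addsub: "ideal_in R I \<Longrightarrow> addsub I"
  unfolding ideal_in_def addsub_def by blast
lemma ideal_sub: "ideal_in R I \<Longrightarrow> I \<subseteq> R"
  unfolding ideal_in_def by blast
lemma ideal_0: "ideal_in R I \<Longrightarrow> 0 \<in> I"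
  unfolding ideal_in_def by blast
lemma ideal_add: "ideal_in R I \<Longrightarrow> x \<in> I \<Longrightarrow> y \<in> I \<Longrightarrow> x + y \<in> I"
  unfolding ideal_in_def by blast
lemma ideal_uminus: "ideal_in R I \<Longrightarrow> x \<in> I \<Longrightarrow> - x \<in> I"
  unfolding ideal_in_def by blast
lemma ideal_diff: "ideal_in R I \<Longrightarrow> x \<in> I \<Longrightarrow> y \<in> I \<Longrightarrow> x - y \<in> I"
  using ideal_addsub addsub_diff by blast
lemma ideal_lmult: "ideal_in R I \<Longrightarrow> r \<in> R \<Longrightarrow> x \<in> I \<Longrightarrow> r * x \<in> I"
  unfolding ideal_in_def by blast
lemma ideal_rmult: "ideal_in R I \<Longrightarrow> r \<in> R \<Longrightarrow> x \<in> I \<Longrightarrow> x * r \<in> I"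
  unfolding ideal_in_def by (metis mult.commute)
lemma ideal_sum: "ideal_in R I \<Longrightarrow> (\<And>i. i \<in> A \<Longrightarrow> f i \<in> I) \<Longrightarrow> sum f A \<in> I"
proof (induction A rule: infinite_finite_induct)
  case (infinite A) then show ?case by (simp add: ideal_0)
next
  case empty then show ?case by (simp add: ideal_0)
next
  case (insert x F) then show ?case by (simp add: ideal_add)
qed

lemma int_rel_elim:
  fixes R :: "'a::field_char_0 set"
  assumes R: "is_subring R" and I: "ideal_in R I" and x: "x \<in> I" "x \<noteq> 0"
  shows "(\<Sum>i\<le>n. of_int (d i) * x ^ i) = 0 \<Longrightarrow> (\<exists>i\<le>n. d i \<noteq> 0) \<Longrightarrow> \<exists>k. k \<noteq> 0 \<and> of_int k \<in> I"
proof (induction n arbitrary: d)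
  case 0
  then show ?case by simp
next
  case (Suc n)
  have xR: "x \<in> R" using x I ideal_sub by blast
  define T where "T = (\<Sum>i\<le>n. of_int (d (Suc i)) * x ^ i)"
  have TR: "T \<in> R" unfolding T_def
    by (intro subring_sum[OF R] subring_mult[OF R] subring_of_int[OF R] subring_power[OF R xR])
  have "(\<Sum>i\<le>Suc n. of_int (d i) * x ^ i) = of_int (d 0) + x * T"
    unfolding sum.atMost_Suc_shift T_def by (simp add: sum_distrib_left algebra_simps)
  then have eq: "of_int (d 0) + x * T = 0" using Suc.prems(1) by simp
  show ?case
  proof (cases "d 0 = 0")
    case False
    have "of_int (d 0) = - (T * x)" using eq by (simp add: algebra_simps eq_neg_iff_add_eq_0)
    also have "\<dots> \<in> I" using I TR x by (intro ideal_uminus[OF I] ideal_lmult[OF I])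
    finally show ?thesis using False by blast
  next
    case True
    then have "T = 0" using eq x(2) by simp
    moreover obtain i where "i \<le> Suc n" "d i \<noteq> 0" using Suc.prems(2) by blast
    then have "\<exists>i\<le>n. (d \<circ> Suc) i \<noteq> 0" using True by (cases i) auto
    ultimately show ?thesis using Suc.IH[of "d \<circ> Suc"] unfolding T_def by simp
  qed
qed

lemma common_denom:
  fixes c :: "'b \<Rightarrow> rat"
  assumes "finite A"
  shows "\<exists>D::int. D > 0 \<and> (\<forall>i\<in>A. \<exists>z. of_int D * c i = of_int z)"
  using assms
proof (induction A rule: finite_induct)
  case empty
  then show ?case by (intro exI[of _ 1]) simp
next
  case (insert a A)
  from insert(3) obtain D where D: "D > 0" "\<forall>i\<in>A. \<exists>z. of_int D * c i = of_int z" by (elim exE conjE)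
  obtain n e where q: "quotient_of (c a) = (n, e)" by (cases "quotient_of (c a)") auto
  have e: "e > 0" using q quotient_of_denom_pos by blast
  have ca: "c a = of_int n / of_int e" using q quotient_of_div by blast
  have ne: "(of_int e :: rat) \<noteq> 0" using e by simp
  have ea: "of_int e * c a = of_int n" unfolding ca using ne by simp
  have 1: "of_int (D * e) * c a = of_int (D * n)"
    by (simp only: of_int_mult mult.assoc ea)
  have 2: "\<exists>z. of_int (D * e) * c i = of_int z" if iA: "i \<in> A" for i
  proof -
    obtain z where "of_int D * c i = of_int z" using bspec[OF D(2) iA] by (elim exE)
    then have "of_int (D * e) * c i = of_int (z * e)" by (simp add: algebra_simps)
    then show ?thesis by blast
  qed
  have 3: "\<forall>i\<in>insert a A. \<exists>z. of_int (D * e) * c i = of_int z"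
  proof
    fix i assume i: "i \<in> insert a A"
    show "\<exists>z. of_int (D * e) * c i = of_int z"
    proof (cases "i = a")
      case True then show ?thesis using 1 by blast
    next
      case False then show ?thesis using 2 i by simp
    qed
  qed
  have pos: "D * e > 0" using D(1) e by simp
  show ?case
  proof (rule exI[of _ "D * e"], rule conjI)
    show "0 < D * e" by (rule pos)
    show "\<forall>i\<in>insert a A. \<exists>z. of_int (D * e) * c i = of_int z" by (rule 3)
  qed
qed

lemma ideal_has_int:
  fixes R :: "'a::field_char_0 set"
  assumes NR: "number_ring R" and I: "ideal_in R I" and x: "x \<in> I" "x \<noteq> 0"
  shows "\<exists>m::nat. m > 0 \<and> of_nat m \<in> I"
proof -
  have R: "is_subring R" using NR unfolding number_ring_def by blast
  obtain K B where KB: "R \<subseteq> K" "finite B" "K = qv.span B" "is_subring K"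
    using number_ring_span[OF NR] by metis
  have xR: "x \<in> R" using x I ideal_sub by blast
  have "\<exists>k. k \<noteq> 0 \<and> of_int k \<in> I"
  proof (cases "inj_on (\<lambda>i. x ^ i) {..card B}")
    case False
    then obtain i j where ij: "i \<le> card B" "j \<le> card B" "i \<noteq> j" "x ^ i = x ^ j"
      unfolding inj_on_def by blast
    have "\<exists>i j. i < j \<and> x ^ i = x ^ j" using ij by (metis nat_neq_iff)
    then obtain i j where ij: "i < j" "x ^ i = x ^ j" by blast
    have "x ^ j = x ^ i * x ^ (j - i)" using ij(1) by (simp flip: power_add)
    then have "x ^ (j - i) = 1" using ij(2) x(2) by simp
    moreover have "x ^ (j - i) = x ^ (j - i - 1) * x" using ij(1)
      by (metis Suc_diff_Suc diff_Suc_1 minus_nat.diff_0 power_Suc2 zero_less_diff)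
    ultimately have "1 = x ^ (j - i - 1) * x" by simp
    moreover have "x ^ (j - i - 1) * x \<in> I"
      using ideal_lmult[OF I subring_power[OF R xR] x(1)] .
    ultimately have "of_int 1 \<in> I" by simp
    then show ?thesis by (intro exI[of _ 1]) simp
  next
    case True
    define X where "X = (\<lambda>i. x ^ i) ` {..card B}"
    have cX: "card X = card B + 1" using True by (simp add: X_def card_image)
    have XK: "X \<subseteq> qv.span B"
      using subring_power[OF KB(4)] xR KB(1,3) by (auto simp: X_def)
    have "qv.dependent X"
    proof (rule ccontr)
      assume "\<not> qv.dependent X"
      then have "card X \<le> card B" using qv.independent_span_bound[OF KB(2) _ XK] by blast
      then show False using cX by simp
    qed
    then obtain u where u: "\<exists>v\<in>X. u v \<noteq> 0" "(\<Sum>v\<in>X. of_rat (u v) * v) = 0"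
      using qv.dependent_finite[of X] by (auto simp: X_def)
    define c where "c = (\<lambda>i. u (x ^ i))"
    have s0: "(\<Sum>i\<le>card B. of_rat (c i) * x ^ i) = 0"
      using u(2) True by (simp add: X_def sum.reindex c_def)
    have nz: "\<exists>i\<le>card B. c i \<noteq> 0" using u(1) by (auto simp: X_def c_def)
    obtain D where D: "D > 0" "\<forall>i\<in>{..card B}. \<exists>z. of_int D * c i = of_int z"
      using common_denom[of "{..card B}" c, OF finite_atMost] by (elim exE conjE)
    then obtain d where d: "\<forall>i\<in>{..card B}. of_int D * c i = of_int (d i)" by metis
    have "(\<Sum>i\<le>card B. of_int (d i) * x ^ i) = (\<Sum>i\<le>card B. of_rat (of_int D) * (of_rat (c i) * x ^ i))"
    proof (rule sum.cong)
      fix i assume "i \<in> {..card B}"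
      then have "of_int (d i) = (of_rat (of_int D * c i) :: 'a)" using d by (metis of_rat_of_int_eq)
      then show "of_int (d i) * x ^ i = of_rat (of_int D) * (of_rat (c i) * x ^ i)"
        by (simp add: of_rat_mult)
    qed simp
    also have "\<dots> = 0" using s0 by (simp flip: sum_distrib_left)
    finally have s1: "(\<Sum>i\<le>card B. of_int (d i) * x ^ i) = 0" .
    have "\<exists>i\<le>card B. d i \<noteq> 0"
    proof -
      obtain i where i: "i \<le> card B" "c i \<noteq> 0" using nz by blast
      then have "of_int (d i) \<noteq> (0::rat)" using d D(1) by (metis atMost_iff mult_eq_0_iff of_int_eq_0_iff less_irrefl)
      then show ?thesis using i by auto
    qed
    then show ?thesis using int_rel_elim[OF R I x s1] by blast
  qed
  then obtain k where k: "k \<noteq> 0" "of_int k \<in> I" by blast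
  show ?thesis
  proof (cases "k > 0")
    case True
    then show ?thesis using k by (intro exI[of _ "nat k"]) simp
  next
    case False
    then have "of_nat (nat (- k)) = - (of_int k :: 'a)" by simp
    moreover have "- (of_int k :: 'a) \<in> I" using ideal_uminus[OF I k(2)] .
    ultimately show ?thesis using k False by (intro exI[of _ "nat (- k)"]) auto
  qed
qed

lemma nonzero_ideal_cosets_finite:
  fixes R :: "'a::field_char_0 set"
  assumes NR: "number_ring R" and I: "ideal_in R I" "I \<noteq> {0}"
  shows "finite ((\<lambda>r. (+) r ` I) ` R)"
proof -
  obtain x where x: "x \<in> I" "x \<noteq> 0" using I ideal_0 by blast
  obtain m :: nat where m: "m > 0" "of_nat m \<in> I" using ideal_has_int[OF NR I(1) x] by blast
  show ?thesis
    using cosets_finite[OF NR ideal_addsub[OF I(1)] ideal_sub[OF I(1)] m(1)] ideal_rmult[OF I(1) _ m(2)]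
    by (metis mult.commute)
qed

lemma finite_ideals_above:
  fixes R :: "'a::field_char_0 set"
  assumes NR: "number_ring R" and I: "ideal_in R I" "I \<noteq> {0}"
  shows "finite {J. ideal_in R J \<and> I \<subseteq> J}"
proof -
  define \<phi> where "\<phi> = (\<lambda>J. (\<lambda>r. (+) r ` I) ` J)"
  let ?F = "{J. ideal_in R J \<and> I \<subseteq> J}"
  have U: "J = \<Union>(\<phi> J)" if "J \<in> ?F" for J
  proof
    show "J \<subseteq> \<Union>(\<phi> J)"
    proof
      fix x assume "x \<in> J"
      moreover have "x \<in> (+) x ` I" using ideal_0[OF I(1)] by force
      ultimately show "x \<in> \<Union>(\<phi> J)" unfolding \<phi>_def by blast
    qed
    show "\<Union>(\<phi> J) \<subseteq> J"
    proof
      fix y assume "y \<in> \<Union>(\<phi> J)"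
      then obtain j i where "j \<in> J" "i \<in> I" "y = j + i" unfolding \<phi>_def by blast
      then show "y \<in> J" using that ideal_add by blast
    qed
  qed
  have inj: "inj_on \<phi> ?F"
    by (rule inj_onI) (metis U)
  have "\<phi> ` ?F \<subseteq> Pow ((\<lambda>r. (+) r ` I) ` R)"
    unfolding \<phi>_def using ideal_sub by blast
  then have "finite (\<phi> ` ?F)"
    using nonzero_ideal_cosets_finite[OF NR I] by (meson finite_Pow_iff finite_subset)
  then show ?thesis using finite_imageD[OF _ inj] by blast
qed

lemma subring_ideal_self: "is_subring R \<Longrightarrow> ideal_in R R"
  unfolding ideal_in_def using subring_0 subring_add subring_uminus subring_mult by blast

lemma exists_maximal_above:
  fixes R :: "'a::field_char_0 set"
  assumes NR: "number_ring R" and I: "ideal_in R I" "I \<noteq> {0}" "I \<noteq> R"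
  shows "\<exists>P. maximal_ideal_in R P \<and> I \<subseteq> P"
proof -
  let ?F = "{J. ideal_in R J \<and> I \<subseteq> J \<and> J \<noteq> R}"
  have fin: "finite ?F" using finite_ideals_above[OF NR I(1,2)] by (rule finite_subset[rotated]) blast
  have "I \<in> ?F" using I by simp
  then have ne: "?F \<noteq> {}" by (metis empty_iff)
  have "\<exists>P\<in>?F. \<forall>J\<in>?F. P \<le> J \<longrightarrow> P = J" by (rule finite_has_maximal[OF fin ne])
  then obtain P where P: "P \<in> ?F" "\<forall>J\<in>?F. P \<le> J \<longrightarrow> P = J"
    by (elim bexE)
  have "maximal_ideal_in R P"
    unfolding maximal_ideal_in_def
  proof (intro conjI allI impI)
    show "ideal_in R P" "P \<noteq> R" using P by auto
    fix J assume "ideal_in R J \<and> P \<subseteq> J"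
    then show "J = P \<or> J = R" using P by blast
  qed
  then show ?thesis using P by blast
qed

lemma ideal_Inter:
  assumes ne: "\<J> \<noteq> {}" and all: "\<forall>J\<in>\<J>. ideal_in R J"
  shows "ideal_in R (\<Inter>\<J>)"
  unfolding ideal_in_def[of R "\<Inter>\<J>"]
proof (intro conjI ballI)
  show "\<Inter>\<J> \<subseteq> R" using ne all ideal_sub by blast
  show "0 \<in> \<Inter>\<J>" using all ideal_0 by blast
  show "x + y \<in> \<Inter>\<J>" if "x \<in> \<Inter>\<J>" "y \<in> \<Inter>\<J>" for x y
    using that all ideal_add by blast
  show "- x \<in> \<Inter>\<J>" if "x \<in> \<Inter>\<J>" for x
    using that all ideal_uminus by blast
  show "r * x \<in> \<Inter>\<J>" if "r \<in> R" "x \<in> \<Inter>\<J>" for r x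
    using that all ideal_lmult by blast
qed

lemma ideal_gen_ideal:
  assumes R: "is_subring R" and S: "S \<subseteq> R"
  shows "ideal_in R (ideal_gen R S)"
proof -
  have RR: "ideal_in R R" using subring_ideal_self[OF R] .
  have "R \<in> {J. ideal_in R J \<and> S \<subseteq> J}" using RR S by simp
  then have "{J. ideal_in R J \<and> S \<subseteq> J} \<noteq> {}" by (metis empty_iff)
  then show ?thesis unfolding ideal_gen_def by (rule ideal_Inter) blast
qed

lemma ideal_gen_sup: "S \<subseteq> ideal_gen R S"
  unfolding ideal_gen_def by blast

lemma ideal_gen_min: "ideal_in R J \<Longrightarrow> S \<subseteq> J \<Longrightarrow> ideal_gen R S \<subseteq> J"
  unfolding ideal_gen_def by blast

lemma ideal_gen_ideal_eq: "ideal_in R J \<Longrightarrow> ideal_gen R J = J"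
  using ideal_gen_sup ideal_gen_min by blast

lemma ideal_gen_insert:
  assumes R: "is_subring R" and S: "S \<subseteq> R" and g: "g \<in> R"
  shows "ideal_gen R (insert g S) = {m + r * g | m r. m \<in> ideal_gen R S \<and> r \<in> R}"
proof -
  let ?M = "ideal_gen R S"
  let ?Z = "{m + r * g | m r. m \<in> ?M \<and> r \<in> R}"
  have M: "ideal_in R ?M" using ideal_gen_ideal[OF R S] .
  have Z: "ideal_in R ?Z"
    unfolding ideal_in_def
  proof (intro conjI ballI)
    show "?Z \<subseteq> R" using M ideal_sub g subring_add[OF R] subring_mult[OF R] by blast
    show "0 \<in> ?Z" using ideal_0[OF M] subring_0[OF R] by force
    show "x + y \<in> ?Z" if xy: "x \<in> ?Z" "y \<in> ?Z" for x y
    proof -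
      obtain m1 r1 m2 r2 where o: "x = m1 + r1 * g" "y = m2 + r2 * g" "m1 \<in> ?M" "m2 \<in> ?M" "r1 \<in> R" "r2 \<in> R"
        using xy by blast
      have "x + y = (m1 + m2) + (r1 + r2) * g" using o by (simp add: algebra_simps)
      moreover have "m1 + m2 \<in> ?M" using o ideal_add[OF M] by blast
      moreover have "r1 + r2 \<in> R" using o subring_add[OF R] by blast
      ultimately show ?thesis by blast
    qed
    show "- x \<in> ?Z" if xy: "x \<in> ?Z" for x
    proof -
      obtain m1 r1 where o: "x = m1 + r1 * g" "m1 \<in> ?M" "r1 \<in> R"
        using xy by blast
      have "- x = (- m1) + (- r1) * g" using o by (simp add: algebra_simps)
      moreover have "- m1 \<in> ?M" using o ideal_uminus[OF M] by blast
      moreover have "- r1 \<in> R" using o subring_uminus[OF R] by blast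
      ultimately show ?thesis by blast
    qed
    show "r * x \<in> ?Z" if xy: "r \<in> R" "x \<in> ?Z" for r x
    proof -
      obtain m1 r1 where o: "x = m1 + r1 * g" "m1 \<in> ?M" "r1 \<in> R"
        using xy by blast
      have "r * x = (r * m1) + (r * r1) * g" using o by (simp add: algebra_simps)
      moreover have "r * m1 \<in> ?M" using o xy ideal_lmult[OF M] by blast
      moreover have "r * r1 \<in> R" using o xy subring_mult[OF R] by blast
      ultimately show ?thesis by blast
    qed
  qed
  have "insert g S \<subseteq> ?Z"
  proof
    fix x assume "x \<in> insert g S"
    then show "x \<in> ?Z"
    proof
      assume "x = g"
      then have "x = 0 + 1 * g" by simp
      then show ?thesis using ideal_0[OF M] subring_1[OF R] by blast
    next
      assume "x \<in> S"
      then have "x \<in> ?M" using ideal_gen_sup by blast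
      moreover have "x = x + 0 * g" by simp
      ultimately show ?thesis using subring_0[OF R] by blast
    qed
  qed
  then have 1: "ideal_gen R (insert g S) \<subseteq> ?Z" using ideal_gen_min[OF Z] by blast
  have N: "ideal_in R (ideal_gen R (insert g S))" using ideal_gen_ideal[OF R] S g by blast
  have "?M \<subseteq> ideal_gen R (insert g S)"
    using ideal_gen_min[OF N] ideal_gen_sup[of "insert g S" R] by blast
  moreover have "g \<in> ideal_gen R (insert g S)" using ideal_gen_sup by blast
  ultimately have 2: "?Z \<subseteq> ideal_gen R (insert g S)"
    using ideal_add[OF N] ideal_lmult[OF N] by blast
  show ?thesis using 1 2 by blast
qed

lemma noetherian:
  fixes R :: "'a::field_char_0 set"
  assumes NR: "number_ring R"
  shows "noetherian_ring R"
  unfolding noetherian_ring_def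
proof (intro allI impI)
  fix I assume I: "ideal_in R I"
  have R: "is_subring R" using NR unfolding number_ring_def by blast
  show "\<exists>F. finite F \<and> F \<subseteq> I \<and> I = ideal_gen R F"
  proof (cases "I = {0}")
    case True
    have "ideal_in R {0}" unfolding ideal_in_def using subring_0[OF R] by auto
    then have "ideal_gen R {} \<subseteq> {0}" using ideal_gen_min by blast
    moreover have "0 \<in> ideal_gen R {}" using ideal_0[OF ideal_gen_ideal[OF R]] by blast
    ultimately show ?thesis using True by (intro exI[of _ "{}"]) auto
  next
    case False
    obtain x where x: "x \<in> I" "x \<noteq> 0" using False ideal_0[OF I] by blast
    obtain m :: nat where m: "m > 0" "of_nat m \<in> I" using ideal_has_int[OF NR I x] by blast
    define M where "M = {of_nat m * r | r. r \<in> R}"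
    have M: "ideal_in R M"
      unfolding ideal_in_def M_def
    proof (intro conjI ballI)
      show "{of_nat m * r |r. r \<in> R} \<subseteq> R" using subring_mult[OF R] subring_of_nat[OF R] by blast
      have "(0::'a) = of_nat m * 0" by simp
      then show "0 \<in> {of_nat m * r |r. r \<in> R}" using subring_0[OF R] by blast
      show "x + y \<in> {of_nat m * r |r. r \<in> R}" if xy: "x \<in> {of_nat m * r |r. r \<in> R}" "y \<in> {of_nat m * r |r. r \<in> R}" for x y
      proof -
        obtain r1 r2 where o: "x = of_nat m * r1" "y = of_nat m * r2" "r1 \<in> R" "r2 \<in> R" using xy by blast
        have "x + y = of_nat m * (r1 + r2)" using o by (simp add: algebra_simps)
        moreover have "r1 + r2 \<in> R" using o subring_add[OF R] by blast
        ultimately show ?thesis by blast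
      qed
      show "- x \<in> {of_nat m * r |r. r \<in> R}" if xy: "x \<in> {of_nat m * r |r. r \<in> R}" for x
      proof -
        obtain r1 where o: "x = of_nat m * r1" "r1 \<in> R" using xy by blast
        have "- x = of_nat m * (- r1)" using o by (simp add: algebra_simps)
        moreover have "- r1 \<in> R" using o subring_uminus[OF R] by blast
        ultimately show ?thesis by blast
      qed
      show "r * x \<in> {of_nat m * r |r. r \<in> R}" if xy: "r \<in> R" "x \<in> {of_nat m * r |r. r \<in> R}" for r x
      proof -
        obtain r1 where o: "x = of_nat m * r1" "r1 \<in> R" using xy by blast
        have "r * x = of_nat m * (r * r1)" using o by (simp add: algebra_simps)
        moreover have "r * r1 \<in> R" using o xy subring_mult[OF R] by blast
        ultimately show ?thesis by blast
      qed
    qed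
    have MI: "M \<subseteq> I" unfolding M_def using ideal_rmult[OF I _ m(2)] by blast
    have "M \<noteq> {0}"
    proof
      assume "M = {0}"
      moreover have "of_nat m * 1 \<in> M" unfolding M_def using subring_1[OF R] by blast
      ultimately show False using m(1) by simp
    qed
    then have finC: "finite ((\<lambda>r. (+) r ` M) ` R)" using nonzero_ideal_cosets_finite[OF NR M] by blast
    let ?C = "(\<lambda>r. (+) r ` M) ` I"
    have "finite ?C" using finC ideal_sub[OF I] by (meson finite_subset image_mono)
    define rep where "rep = (\<lambda>c. SOME x. x \<in> I \<and> c = (+) x ` M)"
    have rep: "rep c \<in> I \<and> c = (+) (rep c) ` M" if "c \<in> ?C" for c
    proof -
      have "\<exists>x. x \<in> I \<and> c = (+) x ` M" using that by blast
      then show ?thesis unfolding rep_def by (rule someI_ex)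
    qed
    define F where "F = insert (of_nat m) (rep ` ?C)"
    have Ffin: "finite F" using \<open>finite ?C\<close> by (simp add: F_def)
    have FI: "F \<subseteq> I" using rep m(2) by (auto simp: F_def)
    have FR: "F \<subseteq> R" using FI ideal_sub[OF I] by blast
    have G: "ideal_in R (ideal_gen R F)" using ideal_gen_ideal[OF R FR] .
    have "I \<subseteq> ideal_gen R F"
    proof
      fix y assume y: "y \<in> I"
      let ?c = "(+) y ` M"
      have c: "?c \<in> ?C" using y by blast
      have "y - rep ?c \<in> M" using rep[OF c] coset_eq_iff[OF ideal_addsub[OF M]] by metis
      then obtain r where r: "r \<in> R" "y - rep ?c = of_nat m * r" unfolding M_def by blast
      have "rep ?c \<in> ideal_gen R F" using c ideal_gen_sup[of F R] by (auto simp: F_def)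
      moreover have "of_nat m * r \<in> ideal_gen R F"
        using ideal_rmult[OF G r(1)] ideal_gen_sup[of F R] by (auto simp: F_def)
      ultimately have "rep ?c + of_nat m * r \<in> ideal_gen R F" using ideal_add[OF G] by blast
      moreover have "y = rep ?c + of_nat m * r" using r(2) by (simp add: algebra_simps)
      ultimately show "y \<in> ideal_gen R F" by simp
    qed
    moreover have "ideal_gen R F \<subseteq> I" using ideal_gen_min[OF I FI] .
    ultimately show ?thesis using Ffin FI by blast
  qed
qed

lemma maximal_is_prime:
  fixes R :: "'a::field_char_0 set"
  assumes R: "is_subring R" and P: "maximal_ideal_in R P"
  shows "prime_ideal_in R P"
  unfolding prime_ideal_in_def
proof (intro conjI ballI impI)
  have PI: "ideal_in R P" using P unfolding maximal_ideal_in_def by blast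
  show "ideal_in R P" "P \<noteq> R" using P unfolding maximal_ideal_in_def by blast+
  fix a b assume ab: "a \<in> R" "b \<in> R" "a * b \<in> P"
  show "a \<in> P \<or> b \<in> P"
  proof (cases "a \<in> P")
    case True then show ?thesis by blast
  next
    case False
    note a = False
    let ?J = "{q + a * r | q r. q \<in> P \<and> r \<in> R}"
    have J: "ideal_in R ?J"
      unfolding ideal_in_def
    proof (intro conjI ballI)
      show "?J \<subseteq> R" using PI ideal_sub ab subring_add[OF R] subring_mult[OF R] by blast
      show "0 \<in> ?J" using ideal_0[OF PI] subring_0[OF R] by force
      show "x + y \<in> ?J" if xy: "x \<in> ?J" "y \<in> ?J" for x y
      proof -
        obtain m1 r1 m2 r2 where o: "x = m1 + a * r1" "y = m2 + a * r2" "m1 \<in> P" "m2 \<in> P" "r1 \<in> R" "r2 \<in> R"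
          using xy by blast
        have "x + y = (m1 + m2) + a * (r1 + r2)" using o by (simp add: algebra_simps)
        moreover have "m1 + m2 \<in> P" using o ideal_add[OF PI] by blast
        moreover have "r1 + r2 \<in> R" using o subring_add[OF R] by blast
        ultimately show ?thesis by blast
      qed
      show "- x \<in> ?J" if xy: "x \<in> ?J" for x
      proof -
        obtain m1 r1 where o: "x = m1 + a * r1" "m1 \<in> P" "r1 \<in> R"
          using xy by blast
        have "- x = (- m1) + a * (- r1)" using o by (simp add: algebra_simps)
        moreover have "- m1 \<in> P" using o ideal_uminus[OF PI] by blast
        moreover have "- r1 \<in> R" using o subring_uminus[OF R] by blast
        ultimately show ?thesis by blast
      qed
      show "r * x \<in> ?J" if xy: "r \<in> R" "x \<in> ?J" for r x
      proof -
        obtain m1 r1 where o: "x = m1 + a * r1" "m1 \<in> P" "r1 \<in> R"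
          using xy by blast
        have "r * x = (r * m1) + a * (r * r1)" using o by (simp add: algebra_simps)
        moreover have "r * m1 \<in> P" using o xy ideal_lmult[OF PI] by blast
        moreover have "r * r1 \<in> R" using o xy subring_mult[OF R] by blast
        ultimately show ?thesis by blast
      qed
    qed
    have PJ: "P \<subseteq> ?J"
    proof
      fix x assume "x \<in> P"
      moreover have "x = x + a * 0" by simp
      ultimately show "x \<in> ?J" using subring_0[OF R] by blast
    qed
    have "a \<in> ?J"
    proof -
      have "a = 0 + a * 1" by simp
      then show ?thesis using ideal_0[OF PI] subring_1[OF R] by blast
    qed
    then have "?J \<noteq> P" using a by blast
    have Pm: "\<forall>J. ideal_in R J \<and> P \<subseteq> J \<longrightarrow> J = P \<or> J = R" using P unfolding maximal_ideal_in_def by blast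
    have "?J = P \<or> ?J = R" using Pm J PJ by meson
    then have "?J = R" using \<open>?J \<noteq> P\<close> by meson
    have "1 \<in> ?J" by (subst \<open>?J = R\<close>) (rule subring_1[OF R])
    then obtain q r where qr: "q \<in> P" "r \<in> R" "1 = q + a * r" by blast
    have "b = b * (q + a * r)" using qr(3) by simp
    also have "\<dots> = q * b + r * (a * b)" by (simp add: algebra_simps)
    finally have "b = q * b + r * (a * b)" .
    moreover have "q * b \<in> P" using ideal_rmult[OF PI ab(2) qr(1)] .
    moreover have "r * (a * b) \<in> P" using ideal_lmult[OF PI qr(2) ab(3)] .
    ultimately have "b \<in> P" using ideal_add[OF PI] by metis
    then show ?thesis by blast
  qed
qed

lemma ideal_one_eq: "ideal_in R J \<Longrightarrow> 1 \<in> J \<Longrightarrow> J = R"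
proof -
  assume J: "ideal_in R J" and one: "1 \<in> J"
  have "R \<subseteq> J"
  proof
    fix r assume "r \<in> R"
    then have "r * 1 \<in> J" using ideal_lmult[OF J _ one] by blast
    then show "r \<in> J" by simp
  qed
  then show "J = R" using ideal_sub[OF J] by blast
qed

lemma prime_1: "prime_ideal_in R P \<Longrightarrow> 1 \<notin> P"
  unfolding prime_ideal_in_def using ideal_one_eq by blast

lemma prime_mult: "prime_ideal_in R P \<Longrightarrow> a \<in> R \<Longrightarrow> b \<in> R \<Longrightarrow> a \<notin> P \<Longrightarrow> b \<notin> P \<Longrightarrow> a * b \<notin> P"
  unfolding prime_ideal_in_def by blast

lemma prime_power: "is_subring R \<Longrightarrow> prime_ideal_in R P \<Longrightarrow> a \<in> R \<Longrightarrow> a \<notin> P \<Longrightarrow> a ^ n \<notin> P"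
proof (induction n)
  case 0 then show ?case using prime_1 by simp
next
  case (Suc n)
  then show ?case using prime_mult[OF Suc.prems(2,3) subring_power[OF Suc.prems(1,3)]] by simp
qed

lemma prime_ideal: "prime_ideal_in R P \<Longrightarrow> ideal_in R P"
  unfolding prime_ideal_in_def by blast

lemma maximal_ideal: "maximal_ideal_in R P \<Longrightarrow> ideal_in R P"
  unfolding maximal_ideal_in_def by blast

lemma prime_nonzero_maximal:
  fixes R :: "'a::field_char_0 set"
  assumes NR: "number_ring R" and P: "prime_ideal_in R P" "P \<noteq> {0}"
  shows "maximal_ideal_in R P"
proof -
  have R: "is_subring R" using NR unfolding number_ring_def by blast
  have PI: "ideal_in R P" using prime_ideal[OF P(1)] .
  have fin: "finite ((\<lambda>r. (+) r ` P) ` R)" using nonzero_ideal_cosets_finite[OF NR PI P(2)] .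
  have "J = P \<or> J = R" if J: "ideal_in R J" "P \<subseteq> J" for J
  proof (rule disjCI)
    assume "J \<noteq> R"
    show "J = P"
    proof (rule ccontr)
      assume "J \<noteq> P"
      then obtain a where a: "a \<in> J" "a \<notin> P" using J(2) by blast
      have aR: "a \<in> R" using a(1) ideal_sub[OF J(1)] by blast
      define f where "f = (\<lambda>k::nat. (+) (a ^ k) ` P)"
      have "range f \<subseteq> (\<lambda>r. (+) r ` P) ` R" unfolding f_def using subring_power[OF R aR] by blast
      then have "finite (range f)" using fin finite_subset by blast
      then have "\<not> inj f" using finite_imageD infinite_UNIV_nat by blast
      then obtain i j where ij: "i \<noteq> j" "f i = f j" unfolding inj_def by blast
      have "\<exists>i j. i < j \<and> f i = f j"
      proof (cases "i < j")
        case True then show ?thesis using ij by blast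
      next
        case False then have "j < i" using ij(1) by simp
        then show ?thesis using ij(2) by metis
      qed
      then obtain i j where ij: "i < j" "f i = f j" by blast
      have "a ^ j - a ^ i \<in> P"
        using ij(2) coset_eq_iff[OF ideal_addsub[OF PI]] unfolding f_def by metis
      moreover have "a ^ j - a ^ i = a ^ i * (a ^ (j - i) - 1)"
      proof -
        have "a ^ j = a ^ i * a ^ (j - i)" using ij(1) by (simp flip: power_add)
        then show ?thesis by (simp add: algebra_simps)
      qed
      ultimately have "a ^ i * (a ^ (j - i) - 1) \<in> P" by simp
      moreover have "a ^ i \<notin> P" using prime_power[OF R P(1) aR a(2)] .
      moreover have "a ^ (j - i) - 1 \<in> R" using subring_diff[OF R subring_power[OF R aR] subring_1[OF R]] .
      ultimately have d: "a ^ (j - i) - 1 \<in> J"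
        using P(1) J(2) subring_power[OF R aR] unfolding prime_ideal_in_def by blast
      have "a ^ (j - i) = a ^ (j - i - 1) * a" using ij(1)
        by (metis Suc_diff_Suc diff_Suc_1 minus_nat.diff_0 power_Suc2 zero_less_diff)
      then have e: "a ^ (j - i) \<in> J" using ideal_lmult[OF J(1) subring_power[OF R aR] a(1)] by simp
      have "a ^ (j - i) - (a ^ (j - i) - 1) \<in> J" using ideal_diff[OF J(1) e d] .
      then have "1 \<in> J" by simp
      then have "J = R" using ideal_one_eq[OF J(1)] by blast
      then show False using \<open>J \<noteq> R\<close> by blast
    qed
  qed
  then show ?thesis unfolding maximal_ideal_in_def using P(1) unfolding prime_ideal_in_def by blast
qed

lemma max_unit:
  fixes R :: "'a::field_char_0 set"
  assumes R: "is_subring R" and P: "maximal_ideal_in R P" and v: "v \<in> R" "v \<notin> P"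
  shows "\<exists>q\<in>P. \<exists>r\<in>R. 1 = q + v * r"
proof -
  have PI: "ideal_in R P" using maximal_ideal[OF P] .
  let ?J = "{q + v * r | q r. q \<in> P \<and> r \<in> R}"
  have J: "ideal_in R ?J"
    unfolding ideal_in_def
  proof (intro conjI ballI)
    show "?J \<subseteq> R" using PI ideal_sub v subring_add[OF R] subring_mult[OF R] by blast
    have "(0::'a) = 0 + v * 0" by simp
    then show "0 \<in> ?J" using ideal_0[OF PI] subring_0[OF R] by blast
    show "x + y \<in> ?J" if xy: "x \<in> ?J" "y \<in> ?J" for x y
    proof -
      obtain m1 r1 m2 r2 where o: "x = m1 + v * r1" "y = m2 + v * r2" "m1 \<in> P" "m2 \<in> P" "r1 \<in> R" "r2 \<in> R"
        using xy by blast
      have "x + y = (m1 + m2) + v * (r1 + r2)" using o by (simp add: algebra_simps)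
      moreover have "m1 + m2 \<in> P" using o ideal_add[OF PI] by blast
      moreover have "r1 + r2 \<in> R" using o subring_add[OF R] by blast
      ultimately show ?thesis by blast
    qed
    show "- x \<in> ?J" if xy: "x \<in> ?J" for x
    proof -
      obtain m1 r1 where o: "x = m1 + v * r1" "m1 \<in> P" "r1 \<in> R"
        using xy by blast
      have "- x = (- m1) + v * (- r1)" using o by (simp add: algebra_simps)
      moreover have "- m1 \<in> P" using o ideal_uminus[OF PI] by blast
      moreover have "- r1 \<in> R" using o subring_uminus[OF R] by blast
      ultimately show ?thesis by blast
    qed
    show "r * x \<in> ?J" if xy: "r \<in> R" "x \<in> ?J" for r x
    proof -
      obtain m1 r1 where o: "x = m1 + v * r1" "m1 \<in> P" "r1 \<in> R"
        using xy by blast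
      have "r * x = (r * m1) + v * (r * r1)" using o by (simp add: algebra_simps)
      moreover have "r * m1 \<in> P" using o xy ideal_lmult[OF PI] by blast
      moreover have "r * r1 \<in> R" using o xy subring_mult[OF R] by blast
      ultimately show ?thesis by blast
    qed
  qed
  have PJ: "P \<subseteq> ?J"
  proof
    fix x assume "x \<in> P"
    moreover have "x = x + v * 0" by simp
    ultimately show "x \<in> ?J" using subring_0[OF R] by blast
  qed
  have "v = 0 + v * 1" by simp
  then have "v \<in> ?J" using ideal_0[OF PI] subring_1[OF R] by blast
  then have "?J \<noteq> P" using v by blast
  have Pm: "\<forall>J. ideal_in R J \<and> P \<subseteq> J \<longrightarrow> J = P \<or> J = R" using P unfolding maximal_ideal_in_def by blast
  have "?J = P \<or> ?J = R" using Pm J PJ by meson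
  then have "?J = R" using \<open>?J \<noteq> P\<close> by meson
  have "1 \<in> ?J" by (subst \<open>?J = R\<close>) (rule subring_1[OF R])
  then show ?thesis by blast
qed

lemma ideal_prod_ideal:
  assumes R: "is_subring R" and I: "ideal_in R I" and J: "ideal_in R J"
  shows "ideal_in R (ideal_prod R I J)"
  unfolding ideal_prod_def
  by (rule ideal_gen_ideal[OF R]) (use ideal_sub[OF I] ideal_sub[OF J] subring_mult[OF R] in blast)

lemma ideal_prod_gen:
  assumes "a \<in> I" "b \<in> J"
  shows "a * b \<in> ideal_prod R I J"
proof -
  have "a * b \<in> {x * y | x y. x \<in> I \<and> y \<in> J}"
    using assms by (intro CollectI exI[of _ a] exI[of _ b]) simp
  then show ?thesis unfolding ideal_prod_def using ideal_gen_sup by (rule subsetD[rotated])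
qed

lemma ideal_prod_sub:
  assumes I: "ideal_in R I" and J: "ideal_in R J"
  shows "ideal_prod R I J \<subseteq> I"
  unfolding ideal_prod_def
  by (rule ideal_gen_min[OF I]) (use ideal_rmult[OF I] ideal_sub[OF J] in blast)

lemma sq_witness:
  fixes R :: "'a::field_char_0 set"
  assumes NR: "number_ring R" and P: "maximal_ideal_in R P" "P \<noteq> {0}"
    and hyp: "ideal_norm R (ideal_prod R P P) \<le> (ideal_norm R P)^2"
  shows "\<exists>\<pi>\<in>P. \<pi> \<noteq> 0 \<and> P \<subseteq> {\<pi> * r + y | r y. r \<in> R \<and> y \<in> ideal_prod R P P}"
proof -
  have R: "is_subring R" using NR unfolding number_ring_def by blast
  have PI: "ideal_in R P" using maximal_ideal[OF P(1)] .
  define P2 where "P2 = ideal_prod R P P"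
  have P2I: "ideal_in R P2" unfolding P2_def using ideal_prod_ideal[OF R PI PI] .
  have P2P: "P2 \<subseteq> P" unfolding P2_def using ideal_prod_sub[OF PI PI] .
  obtain x where x: "x \<in> P" "x \<noteq> 0" using P(2) ideal_0[OF PI] by blast
  show ?thesis
  proof (cases "P \<subseteq> P2")
    case True
    have "P \<subseteq> {x * r + y | r y. r \<in> R \<and> y \<in> P2}"
    proof
      fix z assume "z \<in> P"
      then have "z \<in> P2" using True by blast
      moreover have "z = x * 0 + z" by simp
      ultimately show "z \<in> {x * r + y | r y. r \<in> R \<and> y \<in> P2}" using subring_0[OF R] by blast
    qed
    then show ?thesis using x unfolding P2_def by blast
  next
    case False
    then obtain \<pi> where pi: "\<pi> \<in> P" "\<pi> \<notin> P2" by blast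
    have pi0: "\<pi> \<noteq> 0" using pi ideal_0[OF P2I] by blast
    have piR: "\<pi> \<in> R" using pi ideal_sub[OF PI] by blast
    show ?thesis
    proof (rule ccontr)
      assume "\<not> ?thesis"
      then obtain y where y: "y \<in> P" "y \<notin> {\<pi> * r + y | r y. r \<in> R \<and> y \<in> P2}"
        using pi pi0 unfolding P2_def by blast
      have yR: "y \<in> R" using y ideal_sub[OF PI] by blast
      define C1 where "C1 = (\<lambda>r. (+) r ` P) ` R"
      define C2 where "C2 = (\<lambda>r. (+) r ` P2) ` R"
      have finC1: "finite C1" unfolding C1_def using nonzero_ideal_cosets_finite[OF NR PI P(2)] .
      have "\<pi> * \<pi> \<in> P2" unfolding P2_def using ideal_prod_gen pi by blast
      then have "P2 \<noteq> {0}" using pi0 by auto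
      then have finC2: "finite C2" unfolding C2_def using nonzero_ideal_cosets_finite[OF NR P2I] by blast
      define rep where "rep = (\<lambda>c. if c = P then 0 else SOME x. x \<in> R \<and> c = (+) x ` P)"
      have rep: "rep c \<in> R \<and> c = (+) (rep c) ` P" if c: "c \<in> C1" for c
      proof (cases "c = P")
        case True
        then show ?thesis using subring_0[OF R] by (simp add: rep_def)
      next
        case False
        have "\<exists>x. x \<in> R \<and> c = (+) x ` P" using c unfolding C1_def by blast
        then have "(SOME x. x \<in> R \<and> c = (+) x ` P) \<in> R \<and> c = (+) (SOME x. x \<in> R \<and> c = (+) x ` P) ` P"
          by (rule someI_ex)
        then show ?thesis using False by (simp add: rep_def)
      qed
      define T where "T = rep ` C1"
      have injrep: "inj_on rep C1" by (rule inj_onI) (metis rep)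
      have cardT: "card T = ideal_norm R P" unfolding T_def ideal_norm_def C1_def[symmetric]
        using card_image[OF injrep] .
      have TR: "T \<subseteq> R" unfolding T_def using rep by blast
      have reprep: "rep ((+) t ` P) = t" if "t \<in> T" for t
        using that rep unfolding T_def by force
      have coset_eq: "(+) u ` P = (+) v ` P \<longleftrightarrow> u - v \<in> P" for u v
        using coset_eq_iff[OF ideal_addsub[OF PI]] .
      have coset_eq2: "(+) u ` P2 = (+) v ` P2 \<longleftrightarrow> u - v \<in> P2" for u v
        using coset_eq_iff[OF ideal_addsub[OF P2I]] .
      have Teq: "t = t'" if "t \<in> T" "t' \<in> T" "t - t' \<in> P" for t t'
        using reprep that coset_eq by metis
      have unit: "v \<in> P" if vv: "v \<in> R" "v * \<pi> \<in> P2" for v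
      proof (rule ccontr)
        assume "v \<notin> P"
        then obtain q r where qr: "q \<in> P" "r \<in> R" "1 = q + v * r" using max_unit[OF R P(1) vv(1)] by blast
        have "\<pi> = \<pi> * (q + v * r)" using qr(3) by simp
        also have "\<dots> = q * \<pi> + r * (v * \<pi>)" by (simp add: algebra_simps)
        finally have e: "\<pi> = q * \<pi> + r * (v * \<pi>)" .
        have "q * \<pi> \<in> P2" unfolding P2_def using ideal_prod_gen qr(1) pi(1) by blast
        moreover have "r * (v * \<pi>) \<in> P2" using ideal_lmult[OF P2I qr(2) vv(2)] .
        ultimately have "\<pi> \<in> P2" using ideal_add[OF P2I] e by metis
        then show False using pi by blast
      qed
      define \<Phi> where "\<Phi> = (\<lambda>(t, u). (+) (t + u * \<pi>) ` P2)"
      have injPhi: "inj_on \<Phi> (T \<times> T)"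
      proof (rule inj_onI)
        fix z z' assume z: "z \<in> T \<times> T" "z' \<in> T \<times> T" "\<Phi> z = \<Phi> z'"
        obtain t u t' u' where tu: "z = (t, u)" "z' = (t', u')" by (cases z, cases z') auto
        have mem: "t \<in> T" "u \<in> T" "t' \<in> T" "u' \<in> T" using z tu by auto
        have R4: "t \<in> R" "u \<in> R" "t' \<in> R" "u' \<in> R" using mem TR by auto
        have d: "(t + u * \<pi>) - (t' + u' * \<pi>) \<in> P2" using z(3) tu coset_eq2 unfolding \<Phi>_def by simp
        have "(u - u') * \<pi> \<in> P" using ideal_rmult[OF PI subring_diff[OF R R4(2,4)] pi(1)]
          by (simp add: mult.commute)
        moreover have "(t + u * \<pi>) - (t' + u' * \<pi>) \<in> P" using d P2P by blast
        ultimately have "((t + u * \<pi>) - (t' + u' * \<pi>)) - (u - u') * \<pi> \<in> P" using ideal_diff[OF PI] by blast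
        moreover have "((t + u * \<pi>) - (t' + u' * \<pi>)) - (u - u') * \<pi> = t - t'" by (simp add: algebra_simps)
        ultimately have "t - t' \<in> P" by simp
        then have tt: "t = t'" using Teq mem by blast
        then have "(u - u') * \<pi> \<in> P2" using d by (simp add: algebra_simps)
        then have "u - u' \<in> P" using unit subring_diff[OF R R4(2,4)] by blast
        then have "u = u'" using Teq mem by blast
        then show "z = z'" using tt tu by simp
      qed
      have PhiC2: "\<Phi> ` (T \<times> T) \<subseteq> C2"
      proof
        fix c assume "c \<in> \<Phi> ` (T \<times> T)"
        then obtain t u where "t \<in> T" "u \<in> T" "c = (+) (t + u * \<pi>) ` P2" unfolding \<Phi>_def by auto
        moreover have "t + u * \<pi> \<in> R" using calculation TR subring_add[OF R] subring_mult[OF R] piR by blast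
        ultimately show "c \<in> C2" unfolding C2_def by blast
      qed
      have ynot: "(+) y ` P2 \<notin> \<Phi> ` (T \<times> T)"
      proof
        assume "(+) y ` P2 \<in> \<Phi> ` (T \<times> T)"
        then obtain t u where tu: "t \<in> T" "u \<in> T" "(+) y ` P2 = (+) (t + u * \<pi>) ` P2" unfolding \<Phi>_def by auto
        have R2: "t \<in> R" "u \<in> R" using tu TR by auto
        have d: "y - (t + u * \<pi>) \<in> P2" using tu(3) coset_eq2 by blast
        have "y - (t + u * \<pi>) \<in> P" using d P2P by blast
        moreover have "u * \<pi> \<in> P" using ideal_lmult[OF PI R2(2) pi(1)] .
        ultimately have "y - (y - (t + u * \<pi>)) - u * \<pi> \<in> P"
          using ideal_diff[OF PI] y(1) by blast
        then have "t - 0 \<in> P" by simp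
        moreover have "0 \<in> T"
        proof -
          have "P \<in> C1" unfolding C1_def using subring_0[OF R] by force
          then show ?thesis unfolding T_def rep_def by force
        qed
        ultimately have "t = 0" using Teq tu(1) by blast
        then have "y = \<pi> * u + (y - (t + u * \<pi>))" by (simp add: algebra_simps)
        then show False using y(2) R2(2) d by blast
      qed
      have yC2: "(+) y ` P2 \<in> C2" unfolding C2_def using yR by blast
      have "card (insert ((+) y ` P2) (\<Phi> ` (T \<times> T))) \<le> card C2"
        using PhiC2 yC2 finC2 by (intro card_mono) auto
      moreover have "card (insert ((+) y ` P2) (\<Phi> ` (T \<times> T))) = card (T \<times> T) + 1"
      proof -
        have "finite T" unfolding T_def using finC1 by simp
        then have "finite (\<Phi> ` (T \<times> T))" by simp
        then show ?thesis using ynot card_image[OF injPhi] by simp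
      qed
      moreover have "card (T \<times> T) = (ideal_norm R P)^2" using cardT by (simp add: card_cartesian_product power2_eq_square)
      moreover have "card C2 = ideal_norm R P2" unfolding C2_def ideal_norm_def ..
      ultimately show False using hyp unfolding P2_def by simp
    qed
  qed
qed

definition satp :: "'a::field_char_0 set \<Rightarrow> 'a set \<Rightarrow> 'a set \<Rightarrow> 'a set" where
  "satp R p J = {x \<in> R. \<exists>s\<in>R. s \<notin> p \<and> s * x \<in> J}"

definition pid :: "'a::field_char_0 set \<Rightarrow> 'a \<Rightarrow> 'a set" where
  "pid R a = {a * r | r. r \<in> R}"

lemma satp_ideal:
  assumes R: "is_subring R" and p: "prime_ideal_in R p" and J: "ideal_in R J"
  shows "ideal_in R (satp R p J)"
  unfolding ideal_in_def[of R "satp R p J"]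
proof (intro conjI ballI)
  have one: "1 \<in> R" "1 \<notin> p" using subring_1[OF R] prime_1[OF p] by auto
  show "satp R p J \<subseteq> R" unfolding satp_def by blast
  have "1 * 0 \<in> J" using ideal_0[OF J] by simp
  then show "0 \<in> satp R p J" unfolding satp_def using one subring_0[OF R] by blast
  show "x + y \<in> satp R p J" if xy: "x \<in> satp R p J" "y \<in> satp R p J" for x y
  proof -
    obtain s1 s2 where o: "s1 \<in> R" "s1 \<notin> p" "s1 * x \<in> J" "s2 \<in> R" "s2 \<notin> p" "s2 * y \<in> J" "x \<in> R" "y \<in> R"
      using xy unfolding satp_def by blast
    have "(s1 * s2) * (x + y) = s2 * (s1 * x) + s1 * (s2 * y)" by (simp add: algebra_simps)
    moreover have "s2 * (s1 * x) + s1 * (s2 * y) \<in> J"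
      using o ideal_add[OF J] ideal_lmult[OF J] by blast
    moreover have "s1 * s2 \<in> R" "s1 * s2 \<notin> p" using o subring_mult[OF R] prime_mult[OF p] by auto
    moreover have "x + y \<in> R" using o subring_add[OF R] by blast
    ultimately show ?thesis unfolding satp_def by auto
  qed
  show "- x \<in> satp R p J" if xy: "x \<in> satp R p J" for x
  proof -
    obtain s where o: "s \<in> R" "s \<notin> p" "s * x \<in> J" "x \<in> R"
      using xy unfolding satp_def by blast
    have "s * (- x) = - (s * x)" by simp
    then have "s * (- x) \<in> J" using ideal_uminus[OF J o(3)] by simp
    then show ?thesis unfolding satp_def using o subring_uminus[OF R] by blast
  qed
  show "r * x \<in> satp R p J" if xy: "r \<in> R" "x \<in> satp R p J" for r x
  proof -
    obtain s where o: "s \<in> R" "s \<notin> p" "s * x \<in> J" "x \<in> R"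
      using xy unfolding satp_def by blast
    have e: "s * (r * x) = r * (s * x)" by (simp add: algebra_simps)
    have "r * (s * x) \<in> J" by (rule ideal_lmult[OF J xy(1) o(3)])
    then have "s * (r * x) \<in> J" by (simp only: e)
    then show ?thesis unfolding satp_def using o xy subring_mult[OF R] by blast
  qed
qed

lemma satp_sup:
  assumes R: "is_subring R" and p: "prime_ideal_in R p" and J: "J \<subseteq> R"
  shows "J \<subseteq> satp R p J"
proof
  fix x assume x: "x \<in> J"
  have "1 * x \<in> J" using x by simp
  then show "x \<in> satp R p J" unfolding satp_def using x J subring_1[OF R] prime_1[OF p] by blast
qed

lemma satp_idem:
  assumes R: "is_subring R" and p: "prime_ideal_in R p"
  shows "satp R p (satp R p J) \<subseteq> satp R p J"
proof
  fix x assume "x \<in> satp R p (satp R p J)"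
  then obtain s1 s2 where o: "x \<in> R" "s1 \<in> R" "s1 \<notin> p" "s2 \<in> R" "s2 \<notin> p" "s2 * (s1 * x) \<in> J"
    unfolding satp_def by blast
  have "(s2 * s1) * x \<in> J" using o(6) by (simp add: mult.assoc)
  moreover have "s2 * s1 \<in> R" "s2 * s1 \<notin> p" using o subring_mult[OF R] prime_mult[OF p] by auto
  ultimately show "x \<in> satp R p J" unfolding satp_def using o(1) by blast
qed

lemma satp_mono: "J \<subseteq> J' \<Longrightarrow> satp R p J \<subseteq> satp R p J'"
  unfolding satp_def by blast

lemma pid_ideal:
  assumes R: "is_subring R" and a: "a \<in> R"
  shows "ideal_in R (pid R a)"
  unfolding ideal_in_def[of R "pid R a"]
proof (intro conjI ballI)
  show "pid R a \<subseteq> R" unfolding pid_def using subring_mult[OF R a] by blast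
  have "(0::'a) = a * 0" by simp
  then show "0 \<in> pid R a" unfolding pid_def using subring_0[OF R] by blast
  show "x + y \<in> pid R a" if xy: "x \<in> pid R a" "y \<in> pid R a" for x y
  proof -
    obtain r1 r2 where o: "x = a * r1" "y = a * r2" "r1 \<in> R" "r2 \<in> R" using xy unfolding pid_def by blast
    have "x + y = a * (r1 + r2)" using o by (simp add: algebra_simps)
    moreover have "r1 + r2 \<in> R" using o subring_add[OF R] by blast
    ultimately show ?thesis unfolding pid_def by blast
  qed
  show "- x \<in> pid R a" if xy: "x \<in> pid R a" for x
  proof -
    obtain r1 where o: "x = a * r1" "r1 \<in> R" using xy unfolding pid_def by blast
    have "- x = a * (- r1)" using o by (simp add: algebra_simps)
    moreover have "- r1 \<in> R" using o subring_uminus[OF R] by blast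
    ultimately show ?thesis unfolding pid_def by blast
  qed
  show "r * x \<in> pid R a" if xy: "r \<in> R" "x \<in> pid R a" for r x
  proof -
    obtain r1 where o: "x = a * r1" "r1 \<in> R" using xy unfolding pid_def by blast
    have "r * x = a * (r * r1)" using o by (simp add: algebra_simps)
    moreover have "r * r1 \<in> R" using o xy subring_mult[OF R] by blast
    ultimately show ?thesis unfolding pid_def by blast
  qed
qed

lemma pid_mem: "r \<in> R \<Longrightarrow> a * r \<in> pid R a"
  unfolding pid_def by blast

lemma local_principal:
  fixes R :: "'a::field_char_0 set"
  assumes NR: "number_ring R" and P: "maximal_ideal_in R p" and pi: "\<pi> \<in> p"
    and hypA: "p \<subseteq> {\<pi> * r + y | r y. r \<in> R \<and> y \<in> ideal_prod R p p}"
  shows "p \<subseteq> satp R p (pid R \<pi>)"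
proof -
  have R: "is_subring R" using NR unfolding number_ring_def by blast
  have pI: "ideal_in R p" using maximal_ideal[OF P] .
  have pp: "prime_ideal_in R p" using maximal_is_prime[OF R P] .
  have pR: "p \<subseteq> R" using ideal_sub[OF pI] .
  have piR: "\<pi> \<in> R" using pi pR by blast
  define Q where "Q = satp R p (pid R \<pi>)"
  have QI: "ideal_in R Q" unfolding Q_def using satp_ideal[OF R pp pid_ideal[OF R piR]] .
  have QR: "Q \<subseteq> R" using ideal_sub[OF QI] .
  have main: "finite F \<Longrightarrow> F \<subseteq> p \<Longrightarrow> p \<subseteq> satp R p (ideal_gen R (Q \<union> F)) \<Longrightarrow> p \<subseteq> Q" for F
  proof (induction F rule: finite_induct)
    case empty
    have "ideal_gen R (Q \<union> {}) = Q" using ideal_gen_ideal_eq[OF QI] by simp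
    then have "p \<subseteq> satp R p Q" using empty by simp
    also have "\<dots> \<subseteq> Q" unfolding Q_def by (rule satp_idem[OF R pp])
    finally show ?case .
  next
    case (insert g G)
    have gp: "g \<in> p" and Gp: "G \<subseteq> p" using insert.prems(1) by auto
    have gR: "g \<in> R" using gp pR by blast
    define IG where "IG = ideal_gen R (Q \<union> G)"
    have QG: "Q \<union> G \<subseteq> R" using QR Gp pR by blast
    have IGI: "ideal_in R IG" unfolding IG_def using ideal_gen_ideal[OF R QG] .
    define M where "M = satp R p IG"
    have MI: "ideal_in R M" unfolding M_def using satp_ideal[OF R pp IGI] .
    have IGM: "IG \<subseteq> M" unfolding M_def using satp_sup[OF R pp ideal_sub[OF IGI]] .
    have QIG: "Q \<union> G \<subseteq> IG" unfolding IG_def by (rule ideal_gen_sup)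
    have gen: "ideal_gen R (Q \<union> insert g G) = {m + r * g | m r. m \<in> IG \<and> r \<in> R}"
      using ideal_gen_insert[OF R QG gR] unfolding IG_def by simp
    define Z where "Z = {m + c * g | m c. m \<in> IG \<and> c \<in> p}"
    have ZI: "ideal_in R Z"
      unfolding ideal_in_def[of R Z]
    proof (intro conjI ballI)
      show "Z \<subseteq> R" unfolding Z_def using ideal_sub[OF IGI] pR gR subring_add[OF R] subring_mult[OF R] by blast
      have "(0::'a) = 0 + 0 * g" by simp
      then show "0 \<in> Z" unfolding Z_def using ideal_0[OF IGI] ideal_0[OF pI] by blast
      show "x + y \<in> Z" if xy: "x \<in> Z" "y \<in> Z" for x y
      proof -
        obtain m1 r1 m2 r2 where o: "x = m1 + r1 * g" "y = m2 + r2 * g" "m1 \<in> IG" "m2 \<in> IG" "r1 \<in> p" "r2 \<in> p"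
          using xy unfolding Z_def by blast
        have "x + y = (m1 + m2) + (r1 + r2) * g" using o by (simp add: algebra_simps)
        moreover have "m1 + m2 \<in> IG" using o ideal_add[OF IGI] by blast
        moreover have "r1 + r2 \<in> p" using o ideal_add[OF pI] by blast
        ultimately show ?thesis unfolding Z_def by blast
      qed
      show "- x \<in> Z" if xy: "x \<in> Z" for x
      proof -
        obtain m1 r1 where o: "x = m1 + r1 * g" "m1 \<in> IG" "r1 \<in> p"
          using xy unfolding Z_def by blast
        have "- x = (- m1) + (- r1) * g" using o by (simp add: algebra_simps)
        moreover have "- m1 \<in> IG" using o ideal_uminus[OF IGI] by blast
        moreover have "- r1 \<in> p" using o ideal_uminus[OF pI] by blast
        ultimately show ?thesis unfolding Z_def by blast
      qed
      show "r * x \<in> Z" if xy: "r \<in> R" "x \<in> Z" for r x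
      proof -
        obtain m1 r1 where o: "x = m1 + r1 * g" "m1 \<in> IG" "r1 \<in> p"
          using xy unfolding Z_def by blast
        have "r * x = (r * m1) + (r * r1) * g" using o by (simp add: algebra_simps)
        moreover have "r * m1 \<in> IG" using o xy ideal_lmult[OF IGI] by blast
        moreover have "r * r1 \<in> p" using o xy ideal_lmult[OF pI] by blast
        ultimately show ?thesis unfolding Z_def by blast
      qed
    qed
    have sZI: "ideal_in R (satp R p Z)" using satp_ideal[OF R pp ZI] .
    have P2Z: "ideal_prod R p p \<subseteq> satp R p Z"
      unfolding ideal_prod_def
    proof (rule ideal_gen_min[OF sZI])
      show "{a * b | a b. a \<in> p \<and> b \<in> p} \<subseteq> satp R p Z"
      proof
        fix z assume "z \<in> {a * b | a b. a \<in> p \<and> b \<in> p}"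
        then obtain a b where ab: "z = a * b" "a \<in> p" "b \<in> p" by blast
        have "b \<in> satp R p {m + r * g | m r. m \<in> IG \<and> r \<in> R}" using ab(3) insert.prems(2) gen by auto
        then obtain s m r where o: "s \<in> R" "s \<notin> p" "s * b = m + r * g" "m \<in> IG" "r \<in> R"
          unfolding satp_def by blast
        have aR: "a \<in> R" using ab pR by blast
        have "s * (a * b) = a * m + (a * r) * g" using o(3)
          by (metis (no_types, lifting) distrib_left mult.assoc mult.left_commute)
        moreover have "a * m \<in> IG" using ideal_lmult[OF IGI aR o(4)] .
        moreover have "a * r \<in> p" using ideal_rmult[OF pI o(5) ab(2)] .
        ultimately have "s * (a * b) \<in> Z" unfolding Z_def by blast
        moreover have "a * b \<in> R" using aR ab pR subring_mult[OF R] by blast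
        ultimately show "z \<in> satp R p Z" unfolding satp_def using o(1,2) ab(1) by blast
      qed
    qed
    have gM: "g \<in> M"
    proof -
      obtain r y where ry: "g = \<pi> * r + y" "r \<in> R" "y \<in> ideal_prod R p p" using hypA gp by blast
      have "y \<in> satp R p Z" using ry(3) P2Z by blast
      then obtain s m c where o: "s \<in> R" "s \<notin> p" "s * y = m + c * g" "m \<in> IG" "c \<in> p"
        unfolding satp_def Z_def by blast
      have e: "(s - c) * g = \<pi> * (s * r) + m"
      proof -
        have "s * g = \<pi> * (s * r) + s * y" using ry(1) by (simp add: algebra_simps)
        then show ?thesis using o(3) by (simp add: algebra_simps)
      qed
      have "\<pi> * (s * r) \<in> pid R \<pi>" using pid_mem subring_mult[OF R o(1) ry(2)] by blast
      then have "\<pi> * (s * r) \<in> Q" unfolding Q_def using satp_sup[OF R pp ideal_sub[OF pid_ideal[OF R piR]]] by blast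
      then have "\<pi> * (s * r) \<in> IG" using QIG by blast
      then have "(s - c) * g \<in> IG" using e ideal_add[OF IGI _ o(4)] by simp
      moreover have "s - c \<in> R" using o pR subring_diff[OF R] by blast
      moreover have "s - c \<notin> p"
      proof
        assume "s - c \<in> p"
        then have "(s - c) + c \<in> p" using ideal_add[OF pI _ o(5)] by blast
        then show False using o(2) by simp
      qed
      ultimately show ?thesis unfolding M_def satp_def using gR by blast
    qed
    have "Q \<union> insert g G \<subseteq> M" using QIG IGM gM by blast
    then have "ideal_gen R (Q \<union> insert g G) \<subseteq> M" by (rule ideal_gen_min[OF MI])
    then have "satp R p (ideal_gen R (Q \<union> insert g G)) \<subseteq> satp R p M" by (rule satp_mono)
    also have "\<dots> \<subseteq> M" unfolding M_def by (rule satp_idem[OF R pp])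
    finally have "p \<subseteq> M" using insert.prems(2) by blast
    then have "p \<subseteq> satp R p (ideal_gen R (Q \<union> G))" unfolding M_def IG_def .
    then show ?case by (rule insert.IH[OF Gp])
  qed
  obtain F where F: "finite F" "F \<subseteq> p" "p = ideal_gen R F"
    using noetherian[OF NR] pI unfolding noetherian_ring_def by blast
  have QF: "Q \<union> F \<subseteq> R" using QR F(2) pR by blast
  have "p \<subseteq> ideal_gen R (Q \<union> F)"
    using F(3) ideal_gen_min[OF ideal_gen_ideal[OF R QF]] ideal_gen_sup[of "Q \<union> F" R] by blast
  also have "\<dots> \<subseteq> satp R p (ideal_gen R (Q \<union> F))"
    using satp_sup[OF R pp ideal_sub[OF ideal_gen_ideal[OF R QF]]] .
  finally show ?thesis using main[OF F(1,2)] unfolding Q_def by blast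
qed

lemma nat_step_exists: "P (0::nat) \<Longrightarrow> \<not> P k \<Longrightarrow> \<exists>j. P j \<and> \<not> P (Suc j)"
  by (induction k) auto

lemma valuation:
  fixes R :: "'a::field_char_0 set"
  assumes NR: "number_ring R" and P: "maximal_ideal_in R p" and pi: "\<pi> \<in> p" "\<pi> \<noteq> 0"
    and loc: "p \<subseteq> satp R p (pid R \<pi>)" and a: "a \<in> R" "a \<noteq> 0"
  shows "\<exists>k r s. r \<in> R \<and> s \<in> R \<and> r \<notin> p \<and> s \<notin> p \<and> s * a = \<pi> ^ k * r"
proof -
  have R: "is_subring R" using NR unfolding number_ring_def by blast
  have pI: "ideal_in R p" using maximal_ideal[OF P] .
  have pp: "prime_ideal_in R p" using maximal_is_prime[OF R P] .
  have pR: "p \<subseteq> R" using ideal_sub[OF pI] .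
  have piR: "\<pi> \<in> R" using pi pR by blast
  define V where "V = (\<lambda>k. satp R p (pid R (\<pi> ^ k)))"
  have VI: "ideal_in R (V k)" for k
    unfolding V_def using satp_ideal[OF R pp pid_ideal[OF R subring_power[OF R piR]]] .
  have pidsub: "pid R (\<pi> ^ l) \<subseteq> pid R (\<pi> ^ k)" if "k \<le> l" for k l
  proof
    fix z assume "z \<in> pid R (\<pi> ^ l)"
    then obtain r where r: "z = \<pi> ^ l * r" "r \<in> R" unfolding pid_def by blast
    have "\<pi> ^ l = \<pi> ^ k * \<pi> ^ (l - k)" using that by (simp flip: power_add)
    then have "z = \<pi> ^ k * (\<pi> ^ (l - k) * r)" using r by (simp add: mult.assoc)
    moreover have "\<pi> ^ (l - k) * r \<in> R" using subring_mult[OF R subring_power[OF R piR] r(2)] .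
    ultimately show "z \<in> pid R (\<pi> ^ k)" unfolding pid_def by blast
  qed
  have anti: "V l \<subseteq> V k" if "k \<le> l" for k l
    unfolding V_def using satp_mono[OF pidsub[OF that]] .
  have powV: "\<pi> ^ k \<in> V k" for k
  proof -
    have "\<pi> ^ k * 1 \<in> pid R (\<pi> ^ k)" using pid_mem subring_1[OF R] by blast
    then show ?thesis unfolding V_def
      using satp_sup[OF R pp ideal_sub[OF pid_ideal[OF R subring_power[OF R piR]]]] by auto
  qed
  have aV0: "a \<in> V 0"
  proof -
    have "\<pi> ^ 0 * a \<in> pid R (\<pi> ^ 0)" using pid_mem a(1) by blast
    moreover have "pid R (\<pi> ^ 0) \<subseteq> satp R p (pid R (\<pi> ^ 0))"
      by (rule satp_sup[OF R pp ideal_sub[OF pid_ideal[OF R subring_power[OF R piR]]]])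
    ultimately have "\<pi> ^ 0 * a \<in> V 0" unfolding V_def by blast
    then show ?thesis by simp
  qed
  have notall: "\<exists>k. a \<notin> V k"
  proof (rule ccontr)
    assume "\<not> ?thesis"
    then have all: "a \<in> V k" for k by blast
    have pa: "ideal_in R (pid R a)" using pid_ideal[OF R a(1)] .
    have "a * 1 \<in> pid R a" using pid_mem subring_1[OF R] by blast
    then have pa0: "pid R a \<noteq> {0}" using a(2) by auto
    have "pid R a \<subseteq> V k" for k
    proof
      fix z assume "z \<in> pid R a"
      then obtain r where "z = a * r" "r \<in> R" unfolding pid_def by blast
      then show "z \<in> V k" using ideal_rmult[OF VI _ all] by blast
    qed
    then have "range V \<subseteq> {J. ideal_in R J \<and> pid R a \<subseteq> J}" using VI by blast
    then have "finite (range V)" using finite_ideals_above[OF NR pa pa0] finite_subset by blast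
    then have "\<not> inj V" using finite_imageD infinite_UNIV_nat by blast
    then obtain i j where ij: "i \<noteq> j" "V i = V j" unfolding inj_def by blast
    have "\<exists>i j. i < j \<and> V i = V j"
    proof (cases "i < j")
      case True then show ?thesis using ij by blast
    next
      case False then have "j < i" using ij(1) by simp
      then show ?thesis using ij(2) by metis
    qed
    then obtain i j where ij: "i < j" "V i = V j" by blast
    have "V i \<subseteq> V (Suc i)" using anti[of "Suc i" j] ij by simp
    then have "\<pi> ^ i \<in> V (Suc i)" using powV by blast
    then obtain s where s: "s \<in> R" "s \<notin> p" "s * \<pi> ^ i \<in> pid R (\<pi> ^ Suc i)"
      unfolding V_def satp_def by blast
    then obtain r where r: "s * \<pi> ^ i = \<pi> ^ Suc i * r" "r \<in> R" unfolding pid_def by blast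
    have "\<pi> ^ i * s = \<pi> ^ i * (\<pi> * r)" using r(1) by (simp add: algebra_simps)
    then have "s = \<pi> * r" using pi(2) by simp
    then have "s \<in> p" using ideal_rmult[OF pI r(2) pi(1)] by simp
    then show False using s(2) by blast
  qed
  then obtain k where "a \<notin> V k" by blast
  then obtain j where j: "a \<in> V j" "a \<notin> V (Suc j)" using nat_step_exists[of "\<lambda>k. a \<in> V k"] aV0 by blast
  then obtain s where s: "s \<in> R" "s \<notin> p" "s * a \<in> pid R (\<pi> ^ j)" unfolding V_def satp_def by blast
  then obtain r where r: "s * a = \<pi> ^ j * r" "r \<in> R" unfolding pid_def by blast
  have "r \<notin> p"
  proof
    assume "r \<in> p"
    then have "r \<in> satp R p (pid R \<pi>)" using loc by blast
    then obtain s' where s': "s' \<in> R" "s' \<notin> p" "s' * r \<in> pid R \<pi>" unfolding satp_def by blast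
    then obtain r' where r': "s' * r = \<pi> * r'" "r' \<in> R" unfolding pid_def by blast
    have "(s' * s) * a = \<pi> ^ Suc j * r'"
    proof -
      have "(s' * s) * a = \<pi> ^ j * (s' * r)" using r(1) by (simp add: algebra_simps)
      also have "\<dots> = \<pi> ^ Suc j * r'" using r'(1) by (simp add: algebra_simps)
      finally show ?thesis .
    qed
    then have "(s' * s) * a \<in> pid R (\<pi> ^ Suc j)" using pid_mem r'(2) by metis
    moreover have "s' * s \<in> R" "s' * s \<notin> p" using s s' subring_mult[OF R] prime_mult[OF pp] by auto
    ultimately have "a \<in> V (Suc j)" unfolding V_def satp_def using a(1) by blast
    then show False using j(2) by blast
  qed
  then show ?thesis using r s by blast
qed

lemma local_integral:
  fixes R :: "'a::field_char_0 set"
  assumes NR: "number_ring R" and P: "maximal_ideal_in R p" and pi: "\<pi> \<in> p" "\<pi> \<noteq> 0"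
    and loc: "p \<subseteq> satp R p (pid R \<pi>)"
    and ab: "a \<in> R" "b \<in> R" "b \<noteq> 0" and x: "x = a / b" and int: "integral_over R x"
  shows "\<exists>t\<in>R. t \<notin> p \<and> t * x \<in> R"
proof -
  have R: "is_subring R" using NR unfolding number_ring_def by blast
  have pI: "ideal_in R p" using maximal_ideal[OF P] .
  have pp: "prime_ideal_in R p" using maximal_is_prime[OF R P] .
  have pR: "p \<subseteq> R" using ideal_sub[OF pI] .
  have piR: "\<pi> \<in> R" using pi pR by blast
  show ?thesis
  proof (cases "a = 0")
    case True
    then show ?thesis using subring_1[OF R] prime_1[OF pp] subring_0[OF R] x by auto
  next
    case False
    obtain i r1 s1 where A: "r1 \<in> R" "s1 \<in> R" "r1 \<notin> p" "s1 \<notin> p" "s1 * a = \<pi> ^ i * r1"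
      using valuation[OF NR P pi loc ab(1) False] by (elim exE conjE)
    obtain j r2 s2 where B: "r2 \<in> R" "s2 \<in> R" "r2 \<notin> p" "s2 \<notin> p" "s2 * b = \<pi> ^ j * r2"
      using valuation[OF NR P pi loc ab(2,3)] by (elim exE conjE)
    have pj0: "\<pi> ^ j \<noteq> 0" using pi(2) by simp
    have xb: "x * b = a" using x ab(3) by simp
    show ?thesis
    proof (cases "j \<le> i")
      case True
      define t where "t = s1 * r2"
      have tR: "t \<in> R" "t \<notin> p" unfolding t_def using A B subring_mult[OF R] prime_mult[OF pp] by auto
      have "\<pi> ^ j * (t * x) = \<pi> ^ j * (\<pi> ^ (i - j) * r1 * s2)"
      proof -
        have "\<pi> ^ j * (t * x) = s1 * (\<pi> ^ j * r2) * x" by (simp add: t_def algebra_simps)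
        also have "\<dots> = s2 * (s1 * (x * b))" using B(5) by (simp add: algebra_simps)
        also have "\<dots> = s2 * (\<pi> ^ i * r1)" using xb A(5) by simp
        also have "\<dots> = \<pi> ^ j * (\<pi> ^ (i - j) * r1 * s2)"
          using True by (simp add: algebra_simps flip: power_add)
        finally show ?thesis .
      qed
      then have "t * x = \<pi> ^ (i - j) * r1 * s2" using pj0 mult_left_cancel by blast
      moreover have "\<pi> ^ (i - j) * r1 * s2 \<in> R"
        using subring_mult[OF R subring_mult[OF R subring_power[OF R piR] A(1)] B(2)] .
      ultimately show ?thesis using tR by auto
    next
      case False
      define c where "c = \<pi> ^ (j - i - 1) * r2 * s1"
      define t where "t = s2 * r1"
      define w where "w = \<pi> * c"
      have tR: "t \<in> R" "t \<notin> p" unfolding t_def using A B subring_mult[OF R] prime_mult[OF pp] by auto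
      have cR: "c \<in> R" unfolding c_def
        using subring_mult[OF R subring_mult[OF R subring_power[OF R piR] B(1)] A(2)] .
      have wR: "w \<in> R" unfolding w_def using subring_mult[OF R piR cR] .
      have pw: "\<pi> * \<pi> ^ (j - i - 1) = \<pi> ^ (j - i)" using False
        by (metis Suc_diff_Suc diff_Suc_1 minus_nat.diff_0 not_le power_Suc zero_less_diff)
      have xw: "x * w = t"
      proof -
        have pi0: "\<pi> ^ i \<noteq> 0" using pi(2) by simp
        have "\<pi> ^ i * (x * w) = \<pi> ^ i * \<pi> ^ (j - i) * r2 * s1 * x"
          unfolding w_def c_def using pw by (simp add: algebra_simps flip: pw)
        also have "\<dots> = \<pi> ^ j * r2 * s1 * x" using False by (simp flip: power_add)
        also have "\<dots> = s1 * (s2 * (x * b))" using B(5) by (simp add: algebra_simps)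
        also have "\<dots> = s2 * (\<pi> ^ i * r1)" using xb A(5) by (simp add: algebra_simps)
        also have "\<dots> = \<pi> ^ i * t" by (simp add: t_def algebra_simps)
        finally show ?thesis using pi0 mult_left_cancel by blast
      qed
      obtain n cc where I: "n \<ge> 1" "\<forall>l<n. cc l \<in> R" "x ^ n + (\<Sum>l<n. cc l * x ^ l) = 0"
        using int unfolding integral_over_def by blast
      have tm: "w ^ n * (cc l * x ^ l) = \<pi> * (cc l * t ^ l * c * w ^ (n - l - 1))" if l: "l < n" for l
      proof -
        have "w ^ n = w ^ l * w ^ (n - l)" using l by (simp flip: power_add)
        moreover have "w ^ (n - l) = w * w ^ (n - l - 1)" using l
          by (metis Suc_diff_Suc diff_Suc_1 minus_nat.diff_0 power_Suc zero_less_diff)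
        ultimately have "w ^ n * (cc l * x ^ l) = cc l * (x * w) ^ l * w * w ^ (n - l - 1)"
          by (simp add: power_mult_distrib algebra_simps)
        also have "\<dots> = cc l * t ^ l * w * w ^ (n - l - 1)" using xw by simp
        also have "\<dots> = \<pi> * (cc l * t ^ l * c * w ^ (n - l - 1))" by (simp add: w_def algebra_simps)
        finally show ?thesis .
      qed
      define W where "W = (\<Sum>l<n. cc l * t ^ l * c * w ^ (n - l - 1))"
      have WR: "W \<in> R" unfolding W_def using I(2) tR(1) cR wR
        by (intro subring_sum[OF R]) (simp add: subring_mult[OF R] subring_power[OF R])
      have "0 = w ^ n * (x ^ n + (\<Sum>l<n. cc l * x ^ l))" using I(3) by simp
      also have "\<dots> = (x * w) ^ n + (\<Sum>l<n. w ^ n * (cc l * x ^ l))"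
        by (simp add: algebra_simps power_mult_distrib sum_distrib_left)
      also have "\<dots> = t ^ n + (\<Sum>l<n. \<pi> * (cc l * t ^ l * c * w ^ (n - l - 1)))"
      proof -
        have "(\<Sum>l<n. w ^ n * (cc l * x ^ l)) = (\<Sum>l<n. \<pi> * (cc l * t ^ l * c * w ^ (n - l - 1)))"
          by (rule sum.cong[OF refl], rule tm, simp)
        then show ?thesis using xw by simp
      qed
      also have "\<dots> = t ^ n + \<pi> * W" by (simp add: W_def sum_distrib_left)
      finally have "t ^ n = - (W * \<pi>)" by (simp add: algebra_simps eq_neg_iff_add_eq_0)
      moreover have "- (W * \<pi>) \<in> p" using ideal_uminus[OF pI ideal_lmult[OF pI WR pi(1)]] .
      ultimately have "t ^ n \<in> p" by simp
      then show ?thesis using prime_power[OF R pp tR(1,2)] by blast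
    qed
  qed
qed

lemma integrally_closed_thm:
  fixes R :: "'a::field_char_0 set"
  assumes NR: "number_ring R"
    and hyp: "\<And>P. maximal_ideal_in R P \<Longrightarrow> P \<noteq> {0} \<Longrightarrow>
           ideal_norm R (ideal_prod R P P) \<le> (ideal_norm R P)^2"
  shows "integrally_closed R"
  unfolding integrally_closed_def
proof (intro allI impI)
  fix x assume "(\<exists>a\<in>R. \<exists>b\<in>R. b \<noteq> 0 \<and> x = a / b) \<and> integral_over R x"
  then obtain a b where ab: "a \<in> R" "b \<in> R" "b \<noteq> 0" "x = a / b" and int: "integral_over R x" by blast
  have R: "is_subring R" using NR unfolding number_ring_def by blast
  define D where "D = {r \<in> R. r * x \<in> R}"
  have DI: "ideal_in R D"
    unfolding ideal_in_def[of R D]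
  proof (intro conjI ballI)
    show "D \<subseteq> R" unfolding D_def by blast
    show "0 \<in> D" unfolding D_def using subring_0[OF R] by simp
    show "u + v \<in> D" if "u \<in> D" "v \<in> D" for u v
      using that subring_add[OF R] unfolding D_def by (simp add: distrib_right)
    show "- u \<in> D" if "u \<in> D" for u
      using that subring_uminus[OF R] unfolding D_def by simp
    show "r * u \<in> D" if "r \<in> R" "u \<in> D" for r u
      using that subring_mult[OF R] unfolding D_def by (simp add: mult.assoc)
  qed
  have bD: "b \<in> D" unfolding D_def using ab by simp
  then have D0: "D \<noteq> {0}" using ab(3) by blast
  show "x \<in> R"
  proof (rule ccontr)
    assume xR: "x \<notin> R"
    have "D \<noteq> R"
    proof
      assume "D = R"
      then have "1 \<in> D" using subring_1[OF R] by simp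
      then show False using xR unfolding D_def by simp
    qed
    then obtain p where p: "maximal_ideal_in R p" "D \<subseteq> p" using exists_maximal_above[OF NR DI D0] by blast
    have p0: "p \<noteq> {0}" using p(2) D0 ideal_0[OF DI] by blast
    obtain \<pi> where pi: "\<pi> \<in> p" "\<pi> \<noteq> 0" "p \<subseteq> {\<pi> * r + y | r y. r \<in> R \<and> y \<in> ideal_prod R p p}"
      using sq_witness[OF NR p(1) p0 hyp[OF p(1) p0]] by blast
    have loc: "p \<subseteq> satp R p (pid R \<pi>)" using local_principal[OF NR p(1) pi(1) pi(3)] .
    obtain t where t: "t \<in> R" "t \<notin> p" "t * x \<in> R"
      using local_integral[OF NR p(1) pi(1,2) loc ab int] by blast
    then have "t \<in> D" unfolding D_def by blast
    then show False using t(2) p(2) by blast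
  qed
qed

theorem corollary2p8:
  fixes R :: "'a::field_char_0 set"
  assumes "number_ring R"
    and "\<And>P. maximal_ideal_in R P \<Longrightarrow> P \<noteq> {0} \<Longrightarrow>
           ideal_norm R (ideal_prod R P P) \<le> (ideal_norm R P)^2"
  shows "dedekind_domain R"
  unfolding dedekind_domain_def
proof (intro conjI allI impI)
  show "is_subring R" using assms(1) unfolding number_ring_def by blast
  show "noetherian_ring R" using noetherian[OF assms(1)] .
  show "integrally_closed R" using integrally_closed_thm[OF assms] .
  fix P assume "prime_ideal_in R P \<and> P \<noteq> {0}"
  then show "maximal_ideal_in R P" using prime_nonzero_maximal[OF assms(1)] by blast
qed

end
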